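(* Let $\Gamma$ be the rank four incidence system defined in the context from the cube. Then $\Gamma$ is an incidence geometric representation for the group $\mathrm{Sym}(4)\times C_2$.
   Context: An incidence system is a quadruple $\Gamma=(X,*,t,I)$ where $X$ is a set of elements, $I$ a finite set of types, $t:X\to I$ a surjective type function, and $*$ a symmetric binary relation on $X$ (incidence) such that no two elements of the same type are incident. A correlation of $\Gamma$ is a permutation $\alpha$ of $X$ such that for all $x,y\in X$: $t(x)=t(y)\iff t(\alpha(x))=t(\alpha(y))$, and $x*y\iff \alpha(x)*\alpha(y)$. The correlations form a group $\mathrm{Aut}(\Gamma)$; its normal subgroup of type-preserving correlations is $\mathrm{Aut}_I(\Gamma)$. An incidence geometric representation for a group $G$ is an incidence system $\Gamma$ together with isomorphisms $\varphi_1:\mathrm{Inn}(G)\to\mathrm{Aut}_I(\Gamma)$ and $\varphi_2:\mathrm{Aut}(G)\to\mathrm{Aut}(\Gamma)$ with $\varphi_2|_{\mathrm{Inn}(G)}=\varphi_1$. Construction: consider the 3-dimensional cube with its 8 vertices, 12 edges and 6 square faces. The graph formed by its vertices and edges is bipartite; let $\{P_1,P_2\}$ be its proper 2-coloring (the vertex sets of the two tetrahedra inscribed in the cube). The elements of $\Gamma$ of type $1$ are the vertices in $P_1$, of type $2$ the vertices in $P_2$, of type $3$ the edges of the cube, and of type $4$ the faces of the cube. Incidence is induced from the cube: a vertex and an edge/face are incident iff the vertex lies on it, an edge and a face are incident iff the edge lies on the face; two vertices are never incident. *)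

theory Defs
  imports "HOL-Algebra.Algebra"
begin

definition incidence_system ::
  "'x set \<Rightarrow> ('x \<Rightarrow> 'x \<Rightarrow> bool) \<Rightarrow> ('x \<Rightarrow> 'i) \<Rightarrow> 'i set \<Rightarrow> bool" where
  "incidence_system E inc t Ty \<longleftrightarrow>
     finite Ty \<and> t ` E = Ty \<and>
     (\<forall>x\<in>E. \<forall>y\<in>E. inc x y \<longleftrightarrow> inc y x) \<and>
     (\<forall>x\<in>E. \<forall>y\<in>E. t x = t y \<longrightarrow> \<not> inc x y)"

text \<open>Correlations: permutations of E preserving type-equality and incidence.
  They are taken extensional (as elements of Bij E) so that they form a group
  under composition.\<close>

definition correlations ::
  "'x set \<Rightarrow> ('x \<Rightarrow> 'x \<Rightarrow> bool) \<Rightarrow> ('x \<Rightarrow> 'i) \<Rightarrow> ('x \<Rightarrow> 'x) set" where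
  "correlations E inc t =
     {\<alpha> \<in> Bij E. \<forall>x\<in>E. \<forall>y\<in>E.
         (t x = t y \<longleftrightarrow> t (\<alpha> x) = t (\<alpha> y)) \<and> (inc x y \<longleftrightarrow> inc (\<alpha> x) (\<alpha> y))}"

definition type_preserving_correlations ::
  "'x set \<Rightarrow> ('x \<Rightarrow> 'x \<Rightarrow> bool) \<Rightarrow> ('x \<Rightarrow> 'i) \<Rightarrow> ('x \<Rightarrow> 'x) set" where
  "type_preserving_correlations E inc t =
     {\<alpha> \<in> correlations E inc t. \<forall>x\<in>E. t (\<alpha> x) = t x}"

definition CorGroup ::
  "'x set \<Rightarrow> ('x \<Rightarrow> 'x \<Rightarrow> bool) \<Rightarrow> ('x \<Rightarrow> 'i) \<Rightarrow> ('x \<Rightarrow> 'x) monoid" where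
  "CorGroup E inc t = BijGroup E \<lparr>carrier := correlations E inc t\<rparr>"

definition TypePresCorGroup ::
  "'x set \<Rightarrow> ('x \<Rightarrow> 'x \<Rightarrow> bool) \<Rightarrow> ('x \<Rightarrow> 'i) \<Rightarrow> ('x \<Rightarrow> 'x) monoid" where
  "TypePresCorGroup E inc t = BijGroup E \<lparr>carrier := type_preserving_correlations E inc t\<rparr>"

definition inner_autos :: "('a, 'b) monoid_scheme \<Rightarrow> ('a \<Rightarrow> 'a) set" where
  "inner_autos G =
     {(\<lambda>x \<in> carrier G. g \<otimes>\<^bsub>G\<^esub> x \<otimes>\<^bsub>G\<^esub> inv\<^bsub>G\<^esub> g) | g. g \<in> carrier G}"

definition InnGroup :: "('a, 'b) monoid_scheme \<Rightarrow> ('a \<Rightarrow> 'a) monoid" where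
  "InnGroup G = AutoGroup G \<lparr>carrier := inner_autos G\<rparr>"

definition incidence_geometric_representation ::
  "('a, 'b) monoid_scheme \<Rightarrow> 'x set \<Rightarrow> ('x \<Rightarrow> 'x \<Rightarrow> bool) \<Rightarrow> ('x \<Rightarrow> 'i) \<Rightarrow> 'i set \<Rightarrow> bool"
  where
  "incidence_geometric_representation G E inc t Ty \<longleftrightarrow>
     incidence_system E inc t Ty \<and>
     (\<exists>\<phi>1 \<phi>2.
        \<phi>1 \<in> iso (InnGroup G) (TypePresCorGroup E inc t) \<and>
        \<phi>2 \<in> iso (AutoGroup G) (CorGroup E inc t) \<and>
        (\<forall>\<sigma> \<in> carrier (InnGroup G). \<phi>2 \<sigma> = \<phi>1 \<sigma>))"

text \<open>Every element of the geometry is represented by the set of cube vertices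
  lying on it: a vertex v by {v}, an edge by its two endpoints, a face by its
  four vertices.\<close>

type_synonym cvert = "bool \<times> bool \<times> bool"

fun coord :: "cvert \<Rightarrow> nat \<Rightarrow> bool" where
  "coord (a, b, c) i = (if i = 0 then a else if i = 1 then b else c)"

definition cube_vertices :: "cvert set set" where
  "cube_vertices = {{v} | v. True}"

definition cube_edges :: "cvert set set" where
  "cube_edges = {{u, v} | u v. card {i. i < 3 \<and> coord u i \<noteq> coord v i} = 1}"

definition cube_faces :: "cvert set set" where
  "cube_faces = {{v. coord v i = b} | i b. i < 3}"

definition cube_X :: "cvert set set" where
  "cube_X = cube_vertices \<union> cube_edges \<union> cube_faces"

text \<open>Parity (number of True coordinates) gives the proper 2-colouring of the
  cube graph: P1 = even vertices (type 1), P2 = odd vertices (type 2).\<close>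

definition even_vertex :: "cvert \<Rightarrow> bool" where
  "even_vertex v \<longleftrightarrow> even (card {i. i < 3 \<and> coord v i})"

definition cube_type :: "cvert set \<Rightarrow> nat" where
  "cube_type x =
     (if x \<in> cube_vertices then (if even_vertex (THE v. x = {v}) then 1 else 2)
      else if x \<in> cube_edges then 3 else 4)"

definition cube_inc :: "cvert set \<Rightarrow> cvert set \<Rightarrow> bool" where
  "cube_inc x y \<longleftrightarrow> x \<subset> y \<or> y \<subset> x"

definition cube_I :: "nat set" where
  "cube_I = {1, 2, 3, 4}"

definition Sym4xC2 :: "((nat \<Rightarrow> nat) \<times> int) monoid" where
  "Sym4xC2 = sym_group 4 \<times>\<times> integer_mod_group 2"

end

theory Submission
  imports Defs
begin

declare One_nat_def [simp del]

definition perm4 :: "nat \<Rightarrow> nat \<Rightarrow> nat \<Rightarrow> nat \<Rightarrow> nat \<Rightarrow> nat" where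
  "perm4 a b c d = (\<lambda>i. if i = 1 then a else if i = 2 then b else if i = 3 then c else if i = 4 then d else i)"

lemma perm4_app [simp]: "perm4 a b c d 1 = a" "perm4 a b c d 2 = b" "perm4 a b c d 3 = c" "perm4 a b c d 4 = d"
  by (simp_all add: perm4_def)

lemma perm4_comp [simp]: "perm4 a b c d \<circ> perm4 a' b' c' d' =
   perm4 (perm4 a b c d a') (perm4 a b c d b') (perm4 a b c d c') (perm4 a b c d d')"
  by (rule ext) (simp add: perm4_def)

lemma perm4_eq [simp]: "(perm4 a b c d = perm4 a' b' c' d') \<longleftrightarrow> a = a' \<and> b = b' \<and> c = c' \<and> d = d'"
proof
  assume "perm4 a b c d = perm4 a' b' c' d'"
  hence "\<forall>i. perm4 a b c d i = perm4 a' b' c' d' i" by simp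
  from this[rule_format, of 1] this[rule_format, of 2] this[rule_format, of 3] this[rule_format, of 4]
  show "a = a' \<and> b = b' \<and> c = c' \<and> d = d'" by simp
qed simp

lemma id_perm4: "id = perm4 1 2 3 4"
  by (rule ext) (simp add: perm4_def)

lemma perm4_of:
  assumes "p permutes {1..4}"
  shows "p = perm4 (p 1) (p 2) (p 3) (p 4)"
proof (rule ext)
  fix i show "p i = perm4 (p 1) (p 2) (p 3) (p 4) i"
    using permutes_not_in[OF assms, of i] by (auto simp: perm4_def)
qed

definition S24 :: "(nat \<Rightarrow> nat) set" where
  "S24 = {perm4 1 2 3 4, perm4 1 2 4 3, perm4 1 3 2 4, perm4 1 3 4 2, perm4 1 4 2 3, perm4 1 4 3 2,
          perm4 2 1 3 4, perm4 2 1 4 3, perm4 2 3 1 4, perm4 2 3 4 1, perm4 2 4 1 3, perm4 2 4 3 1,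
          perm4 3 1 2 4, perm4 3 1 4 2, perm4 3 2 1 4, perm4 3 2 4 1, perm4 3 4 1 2, perm4 3 4 2 1,
          perm4 4 1 2 3, perm4 4 1 3 2, perm4 4 2 1 3, perm4 4 2 3 1, perm4 4 3 1 2, perm4 4 3 2 1}"

lemma perm4_permutes:
  assumes "a \<in> {1..4}" "b \<in> {1..4}" "c \<in> {1..4}" "d \<in> {1..4}"
    "a \<noteq> b" "a \<noteq> c" "a \<noteq> d" "b \<noteq> c" "b \<noteq> d" "c \<noteq> d"
  shows "perm4 a b c d permutes {1..4}"
proof (rule bij_imp_permutes)
  have e: "{1..4::nat} = {1,2,3,4}" by auto
  show "bij_betw (perm4 a b c d) {1..4} {1..4}"
    unfolding e using assms 
    by (auto simp: bij_betw_def inj_on_def e)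
  show "\<And>x. x \<notin> {1..4} \<Longrightarrow> perm4 a b c d x = x" by (auto simp: perm4_def)
qed

lemma S24_permutes: "p \<in> S24 \<Longrightarrow> p permutes {1..4}"
  unfolding S24_def by (auto intro!: perm4_permutes)

lemma card_S24: "card S24 = 24"
  unfolding S24_def by simp

lemma S24_eq: "S24 = {p. p permutes {1..4}}"
proof (rule card_subset_eq)
  show "finite {p. p permutes {1..4::nat}}" by (rule finite_permutations) simp
  show "S24 \<subseteq> {p. p permutes {1..4}}" using S24_permutes by blast
  show "card S24 = card {p. p permutes {1..4::nat}}"
    using card_permutations[of "{1..4::nat}" 4] by (simp add: card_S24 fact_numeral)
qed

lemma S4_in_S24: "p permutes {1..4} \<Longrightarrow> p \<in> S24"
  using S24_eq by blast


abbreviation "s1 \<equiv> perm4 2 1 3 4"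
abbreviation "s2 \<equiv> perm4 1 3 2 4"
abbreviation "s3 \<equiv> perm4 1 2 4 3"

definition gen :: "nat \<Rightarrow> nat \<Rightarrow> nat" where
  "gen i = (if i = 1 then s1 else if i = 2 then s2 else s3)"

fun word :: "nat list \<Rightarrow> nat \<Rightarrow> nat" where
  "word [] = id"
| "word (i # w) = gen i \<circ> word w"

lemma S24_words: "p \<in> S24 \<Longrightarrow> \<exists>w. p = word w"
proof -
  have W: "perm4 1 2 3 4 = word []" "perm4 2 1 3 4 = word [1]" "perm4 1 3 2 4 = word [2]" "perm4 1 2 4 3 = word [3]" "perm4 3 1 2 4 = word [2,1]" "perm4 2 1 4 3 = word [3,1]" "perm4 2 3 1 4 = word [1,2]" "perm4 1 4 2 3 = word [3,2]" "perm4 1 3 4 2 = word [2,3]" "perm4 3 2 1 4 = word [1,2,1]" "perm4 4 1 2 3 = word [3,2,1]" "perm4 3 1 4 2 = word [2,3,1]" "perm4 2 4 1 3 = word [3,1,2]" "perm4 1 4 3 2 = word [2,3,2]" "perm4 2 3 4 1 = word [1,2,3]" "perm4 4 2 1 3 = word [3,1,2,1]" "perm4 4 1 3 2 = word [2,3,2,1]" "perm4 3 2 4 1 = word [1,2,3,1]" "perm4 3 4 1 2 = word [2,3,1,2]" "perm4 2 4 3 1 = word [1,2,3,2]" "perm4 4 3 1 2 = word [2,3,1,2,1]" "perm4 4 2 3 1 = word [1,2,3,2,1]" "perm4 3 4 2 1 = word [1,2,3,1,2]" "perm4 4 3 2 1 = word [1,2,3,1,2,1]"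
    by (simp_all add: gen_def id_perm4)
  assume "p \<in> S24"
  then show ?thesis unfolding S24_def
    by (elim insertE emptyE; metis W)
qed

lemma gen_carrier: "gen i \<in> carrier (sym_group 4)"
  unfolding gen_def sym_group_carrier by (auto intro!: perm4_permutes)

lemma word_carrier: "word w \<in> carrier (sym_group 4)"
proof (induction w)
  case Nil
  show ?case unfolding word.simps sym_group_carrier by (rule permutes_id)
next
  case (Cons i w)
  show ?case unfolding word.simps sym_group_carrier
    by (rule permutes_compose) (use Cons gen_carrier in \<open>auto simp: sym_group_carrier\<close>)
qed

lemma hom_S4_ext:
  assumes "group H" "f \<in> hom (sym_group 4) H" "f' \<in> hom (sym_group 4) H"
    "f s1 = f' s1" "f s2 = f' s2" "f s3 = f' s3" "p permutes {1..4}"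
  shows "f p = f' p"
proof -
  interpret h1: group_hom "sym_group 4" H f
    using assms sym_group_is_group by (simp add: group_hom_def group_hom_axioms_def)
  interpret h2: group_hom "sym_group 4" H f'
    using assms sym_group_is_group by (simp add: group_hom_def group_hom_axioms_def)
  have g: "f (gen i) = f' (gen i)" for i using assms by (simp add: gen_def)
  have "f (word w) = f' (word w)" for w
  proof (induction w)
    case Nil
    then show ?case using h1.hom_one h2.hom_one by (simp only: word.simps sym_group_one)
  next
    case (Cons i w)
    have "f (word (i # w)) = f (gen i \<otimes>\<^bsub>sym_group 4\<^esub> word w)" by (simp add: sym_group_mult)
    also have "\<dots> = f (gen i) \<otimes>\<^bsub>H\<^esub> f (word w)" by (simp add: gen_carrier word_carrier)
    also have "\<dots> = f' (gen i) \<otimes>\<^bsub>H\<^esub> f' (word w)" using g Cons by simp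
    also have "\<dots> = f' (gen i \<otimes>\<^bsub>sym_group 4\<^esub> word w)" by (simp add: gen_carrier word_carrier)
    finally show ?case by (simp only: word.simps sym_group_mult)
  qed
  moreover obtain w where "p = word w" using S24_words S4_in_S24 assms(7) by blast
  ultimately show ?thesis by simp
qed

lemma center_gens:
  assumes "g permutes {1..4}" "g \<circ> s1 = s1 \<circ> g" "g \<circ> s2 = s2 \<circ> g" "g \<circ> s3 = s3 \<circ> g"
  shows "g = id"
  using S4_in_S24[OF assms(1)] assms(2-4) unfolding S24_def id_perm4
  by (elim insertE emptyE; simp)

definition I9 :: "(nat \<Rightarrow> nat) set" where
  "I9 = {perm4 1 2 4 3, perm4 1 3 2 4, perm4 1 4 3 2, perm4 2 1 3 4, perm4 2 1 4 3, perm4 3 2 1 4, perm4 3 4 1 2, perm4 4 2 3 1, perm4 4 3 2 1}"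

lemma inv9:
  assumes "x permutes {1..4}" "x \<circ> x = id" "x \<noteq> id"
  shows "x \<in> I9"
  using S4_in_S24[OF assms(1)] assms(2-3) unfolding S24_def id_perm4 I9_def
  by (elim insertE emptyE; simp)



definition good3 where
  "good3 x1 x2 x3 \<longleftrightarrow> (\<exists>g\<in>S24. x1 \<circ> g = g \<circ> s1 \<and> x2 \<circ> g = g \<circ> s2 \<and> x3 \<circ> g = g \<circ> s3)"

lemma aut_gens:
  assumes "x1 \<in> I9" "x2 \<in> I9" "x3 \<in> I9" "x1 \<noteq> x2" "x2 \<noteq> x3" "x1 \<noteq> x3"
    "x1 \<circ> x2 \<circ> x1 = x2 \<circ> x1 \<circ> x2" "x2 \<circ> x3 \<circ> x2 = x3 \<circ> x2 \<circ> x3" "x1 \<circ> x3 = x3 \<circ> x1"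
  shows "good3 x1 x2 x3"
  using assms unfolding I9_def 
  apply (elim insertE emptyE)
  apply simp_all
  apply (simp_all add: good3_def S24_def)
  done

lemma carrier_G: "carrier Sym4xC2 = {p. p permutes {1..4}} \<times> {0..<2}"
  by (simp add: Sym4xC2_def sym_group_def carrier_integer_mod_group)

lemma mult_G: "x \<otimes>\<^bsub>Sym4xC2\<^esub> y = (fst x \<circ> fst y, (snd x + snd y) mod 2)"
  by (simp add: Sym4xC2_def mult_DirProd' sym_group_mult)

lemma one_G: "\<one>\<^bsub>Sym4xC2\<^esub> = (id, 0)"
  by (simp add: Sym4xC2_def sym_group_one)

lemma group_G: "group Sym4xC2"
  unfolding Sym4xC2_def by (rule DirProd_group[OF sym_group_is_group group_integer_mod_group])

lemma C2_cases: "(c::int) \<in> {0..<2} \<Longrightarrow> c = 0 \<or> c = 1"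
  by auto

definition sg :: "(nat \<Rightarrow> nat) \<Rightarrow> int" where
  "sg p = (if evenperm p then 0 else 1)"

lemma perm_S4: "p permutes {1..4::nat} \<Longrightarrow> permutation p"
  by (rule permutes_imp_permutation[of "{1..4}"]) auto

lemma sg_comp: "p permutes {1..4} \<Longrightarrow> q permutes {1..4} \<Longrightarrow> sg (p \<circ> q) = (sg p + sg q) mod 2"
  using evenperm_comp[OF perm_S4 perm_S4, of p q] by (auto simp: sg_def)

lemma sg_conj: "g permutes {1..4} \<Longrightarrow> p permutes {1..4} \<Longrightarrow> sg (g \<circ> p \<circ> inv' g) = sg p"
proof -
  assume g: "g permutes {1..4}" and p: "p permutes {1..4}"
  have ig: "inv' g permutes {1..4}" using permutes_inv[OF g] .
  have "evenperm (g \<circ> p \<circ> inv' g) = (evenperm (g \<circ> p) = evenperm (inv' g))"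
    by (rule evenperm_comp) (use perm_S4 g p ig permutes_compose in auto)
  also have "\<dots> = ((evenperm g = evenperm p) = evenperm g)"
    using evenperm_comp[OF perm_S4[OF g] perm_S4[OF p]] evenperm_inv[OF perm_S4[OF g]] by simp
  finally show ?thesis by (auto simp: sg_def)
qed

lemma sg_range: "sg p \<in> {0..<2}" by (simp add: sg_def)

lemma s_transp: "s1 = transpose 1 2" "s2 = transpose 2 3" "s3 = transpose 3 4"
  by (auto simp: fun_eq_iff transpose_def perm4_def)

lemma sg_gens: "sg s1 = 1" "sg s2 = 1" "sg s3 = 1"
  unfolding s_transp sg_def by (simp_all add: evenperm_swap)

lemma s_permutes: "s1 permutes {1..4}" "s2 permutes {1..4}" "s3 permutes {1..4}"
  by (auto intro!: perm4_permutes)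

definition autm :: "(nat \<Rightarrow> nat) \<Rightarrow> int \<Rightarrow> ((nat \<Rightarrow> nat) \<times> int) \<Rightarrow> ((nat \<Rightarrow> nat) \<times> int)" where
  "autm g e = (\<lambda>x\<in>carrier Sym4xC2. (g \<circ> fst x \<circ> inv' g, (snd x + e * sg (fst x)) mod 2))"

lemma autm_in_carrier:
  assumes "g permutes {1..4}" "x \<in> carrier Sym4xC2"
  shows "autm g e x \<in> carrier Sym4xC2"
  using assms by (auto simp: autm_def carrier_G intro!: permutes_compose permutes_inv)

lemma autm_autm:
  assumes g: "g permutes {1..4}" and h: "h permutes {1..4}" and e: "e \<in> {0..<2}" and f: "f \<in> {0..<2}"
    and x: "x \<in> carrier Sym4xC2"
  shows "autm g e (autm h f x) = autm (g \<circ> h) ((e + f) mod 2) x"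
proof -
  obtain p c where xpc: "x = (p, c)" by fastforce
  have p: "p permutes {1..4}" and c: "c \<in> {0..<2}" using x xpc carrier_G by auto
  have hp: "h \<circ> p \<circ> inv' h permutes {1..4}"
    using h p by (auto intro!: permutes_compose permutes_inv)
  have inv: "inv' (g \<circ> h) = inv' h \<circ> inv' g"
    using o_inv_distrib[OF permutes_bij[OF g] permutes_bij[OF h]] .
  have 1: "autm h f x = (h \<circ> p \<circ> inv' h, (c + f * sg p) mod 2)" using x xpc by (simp add: autm_def)
  have 2: "autm h f x \<in> carrier Sym4xC2" using autm_in_carrier[OF h x] .
  have "autm g e (autm h f x) = (g \<circ> (h \<circ> p \<circ> inv' h) \<circ> inv' g, ((c + f * sg p) mod 2 + e * sg p) mod 2)"
    using 1 2 sg_conj[OF h p] by (simp add: autm_def)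
  also have "\<dots> = autm (g \<circ> h) ((e + f) mod 2) x"
    using x xpc inv C2_cases[OF e] C2_cases[OF f] C2_cases[OF sg_range[of p]] C2_cases[OF c]
    by (auto simp: autm_def o_assoc)
  finally show ?thesis .
qed

lemma autm_id: "x \<in> carrier Sym4xC2 \<Longrightarrow> autm id 0 x = x"
  using C2_cases by (auto simp: autm_def carrier_G inv_id)

lemma autm_Bij:
  assumes g: "g permutes {1..4}" and e: "e \<in> {0..<2}"
  shows "autm g e \<in> Bij (carrier Sym4xC2)"
proof -
  have ig: "inv' g permutes {1..4}" using permutes_inv[OF g] .
  have "bij_betw (autm g e) (carrier Sym4xC2) (carrier Sym4xC2)"
  proof (rule bij_betw_byWitness[where f' = "autm (inv' g) e"])
    show "\<forall>a\<in>carrier Sym4xC2. autm (inv' g) e (autm g e a) = a"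
      using autm_autm[OF ig g e e] permutes_inv_o(2)[OF g] autm_id e C2_cases[OF e] by auto
    show "\<forall>a'\<in>carrier Sym4xC2. autm g e (autm (inv' g) e a') = a'"
      using autm_autm[OF g ig e e] permutes_inv_o(1)[OF g] autm_id e C2_cases[OF e] by auto
    show "autm g e ` carrier Sym4xC2 \<subseteq> carrier Sym4xC2"
      using autm_in_carrier[OF g] by auto
    show "autm (inv' g) e ` carrier Sym4xC2 \<subseteq> carrier Sym4xC2"
      using autm_in_carrier[OF ig] by auto
  qed
  then show ?thesis by (simp add: Bij_def autm_def)
qed

lemma autm_hom:
  assumes g: "g permutes {1..4}" and e: "e \<in> {0..<2}"
  shows "autm g e \<in> hom Sym4xC2 Sym4xC2"
proof (rule homI)
  show "\<And>x. x \<in> carrier Sym4xC2 \<Longrightarrow> autm g e x \<in> carrier Sym4xC2"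
    using autm_in_carrier[OF g] .
  fix x y assume x: "x \<in> carrier Sym4xC2" and y: "y \<in> carrier Sym4xC2"
  obtain p c where xpc: "x = (p, c)" by fastforce
  obtain q d where yqd: "y = (q, d)" by fastforce
  have p: "p permutes {1..4}" and c: "c \<in> {0..<2}" using x xpc carrier_G by auto
  have q: "q permutes {1..4}" and d: "d \<in> {0..<2}" using y yqd carrier_G by auto
  have xy: "x \<otimes>\<^bsub>Sym4xC2\<^esub> y \<in> carrier Sym4xC2"
    using group.subgroup_self[OF group_G] x y by (simp add: subgroup.m_closed)
  have gg: "g \<circ> p \<circ> inv' g \<circ> (g \<circ> q \<circ> inv' g) = g \<circ> (p \<circ> q) \<circ> inv' g"
    using permutes_inv_o(2)[OF g] by (simp add: o_assoc) (metis comp_assoc comp_id)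
  show "autm g e (x \<otimes>\<^bsub>Sym4xC2\<^esub> y) = autm g e x \<otimes>\<^bsub>Sym4xC2\<^esub> autm g e y"
    using xy x y xpc yqd sg_comp[OF p q] gg
      C2_cases[OF e] C2_cases[OF sg_range[of p]] C2_cases[OF sg_range[of q]] C2_cases[OF c] C2_cases[OF d]
    by (auto simp: autm_def mult_G)
qed

lemma autm_auto:
  assumes g: "g permutes {1..4}" and e: "e \<in> {0..<2}"
  shows "autm g e \<in> auto Sym4xC2"
  using autm_hom[OF assms] autm_Bij[OF assms] by (simp add: auto_def)


lemma mult_Auto:
  "a \<in> Bij (carrier G) \<Longrightarrow> b \<in> Bij (carrier G) \<Longrightarrow> a \<otimes>\<^bsub>AutoGroup G\<^esub> b = compose (carrier G) a b"
  by (simp add: AutoGroup_def BijGroup_def)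

lemma carrier_Auto: "carrier (AutoGroup G) = auto G"
  by (simp add: AutoGroup_def)

lemma conj_eq_cancel:
  assumes g: "g permutes {1..4}" and h: "h permutes {1..4}" and eq: "g \<circ> s \<circ> inv' g = h \<circ> s \<circ> inv' h"
  shows "(inv' h \<circ> g) \<circ> s = s \<circ> (inv' h \<circ> g)"
proof -
  have "inv' h \<circ> (g \<circ> s \<circ> inv' g) \<circ> g = inv' h \<circ> (h \<circ> s \<circ> inv' h) \<circ> g" using eq by simp
  moreover have "inv' h \<circ> (g \<circ> s \<circ> inv' g) \<circ> g = (inv' h \<circ> g) \<circ> s \<circ> (inv' g \<circ> g)" by (simp add: o_assoc)
  moreover have "inv' h \<circ> (h \<circ> s \<circ> inv' h) \<circ> g = (inv' h \<circ> h) \<circ> s \<circ> (inv' h \<circ> g)" by (simp add: o_assoc)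
  ultimately show ?thesis using permutes_inv_o(2)[OF g] permutes_inv_o(2)[OF h] by (simp add: o_assoc)
qed

lemma autm_inj:
  assumes g: "g permutes {1..4}" and h: "h permutes {1..4}" and e: "e \<in> {0..<2}" and f: "f \<in> {0..<2}"
    and eq: "autm g e = autm h f"
  shows "g = h \<and> e = f"
proof -
  have c: "(s, 0) \<in> carrier Sym4xC2" if "s permutes {1..4}" for s using that by (simp add: carrier_G)
  have ev: "(g \<circ> s \<circ> inv' g, (e * sg s) mod 2) = (h \<circ> s \<circ> inv' h, (f * sg s) mod 2)" if "s permutes {1..4}" for s
    using fun_cong[OF eq, of "(s,0)"] c[OF that] by (simp add: autm_def)
  have "e = f" using ev[OF s_permutes(1)] sg_gens(1) e f by auto
  moreover have k: "(inv' h \<circ> g) \<circ> s = s \<circ> (inv' h \<circ> g)" if "s permutes {1..4}" for s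
    using conj_eq_cancel[OF g h] ev[OF that] by simp
  have "inv' h \<circ> g = id"
  proof (rule center_gens)
    show "inv' h \<circ> g permutes {1..4}" using permutes_compose[OF g permutes_inv[OF h]] .
  qed (use k s_permutes in auto)
  then have "h \<circ> (inv' h \<circ> g) = h" by simp
  then have "g = h" using permutes_inv_o(1)[OF h] by (simp add: o_assoc)
  ultimately show ?thesis by simp
qed

definition A :: "(nat \<Rightarrow> nat) \<times> int \<Rightarrow> ((nat \<Rightarrow> nat) \<times> int) \<Rightarrow> ((nat \<Rightarrow> nat) \<times> int)" where
  "A x = autm (fst x) (snd x)"

lemma A_hom: "A \<in> hom Sym4xC2 (AutoGroup Sym4xC2)"
proof (rule homI)
  fix x assume "x \<in> carrier Sym4xC2"
  then show "A x \<in> carrier (AutoGroup Sym4xC2)"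
    by (auto simp: A_def carrier_Auto carrier_G intro!: autm_auto)
next
  fix x y assume x: "x \<in> carrier Sym4xC2" and y: "y \<in> carrier Sym4xC2"
  obtain g e where xpc: "x = (g, e)" by fastforce
  obtain h f where yqd: "y = (h, f)" by fastforce
  have g: "g permutes {1..4}" and e: "e \<in> {0..<2}" using x xpc carrier_G by auto
  have h: "h permutes {1..4}" and f: "f \<in> {0..<2}" using y yqd carrier_G by auto
  have "compose (carrier Sym4xC2) (autm g e) (autm h f) = autm (g \<circ> h) ((e + f) mod 2)"
  proof (rule ext)
    fix z show "compose (carrier Sym4xC2) (autm g e) (autm h f) z = autm (g \<circ> h) ((e + f) mod 2) z"
      using autm_autm[OF g h e f, of z] by (cases "z \<in> carrier Sym4xC2") (auto simp: compose_def autm_def)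
  qed
  then show "A (x \<otimes>\<^bsub>Sym4xC2\<^esub> y) = A x \<otimes>\<^bsub>AutoGroup Sym4xC2\<^esub> A y"
    using xpc yqd autm_Bij[OF g e] autm_Bij[OF h f] by (simp add: A_def mult_G mult_Auto)
qed


lemma s_facts:
  "s1 \<circ> s1 = id" "s2 \<circ> s2 = id" "s3 \<circ> s3 = id" "s1 \<noteq> id" "s2 \<noteq> id" "s3 \<noteq> id"
  "s1 \<noteq> s2" "s2 \<noteq> s3" "s1 \<noteq> s3"
  "s1 \<circ> s2 \<circ> s1 = s2 \<circ> s1 \<circ> s2" "s2 \<circ> s3 \<circ> s2 = s3 \<circ> s2 \<circ> s3" "s1 \<circ> s3 = s3 \<circ> s1"
  by (simp_all add: id_perm4)

lemma conj_hom:
  assumes g: "g permutes {1..4}"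
  shows "(\<lambda>p. g \<circ> p \<circ> inv' g) \<in> hom (sym_group 4) (sym_group 4)"
proof (rule homI)
  fix x assume "x \<in> carrier (sym_group 4)"
  then show "g \<circ> x \<circ> inv' g \<in> carrier (sym_group 4)"
    using g by (auto simp: sym_group_carrier intro!: permutes_compose permutes_inv)
next
  fix x y
  show "g \<circ> (x \<otimes>\<^bsub>sym_group 4\<^esub> y) \<circ> inv' g =
        (g \<circ> x \<circ> inv' g) \<otimes>\<^bsub>sym_group 4\<^esub> (g \<circ> y \<circ> inv' g)"
    using permutes_inv_o(2)[OF g] by (simp add: sym_group_mult o_assoc) (metis comp_assoc comp_id)
qed

lemma sgmod_hom:
  assumes e: "e \<in> {0..<2::int}"
  shows "(\<lambda>p. (e * sg p) mod 2) \<in> hom (sym_group 4) (integer_mod_group 2)"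
proof (rule homI)
  fix x assume "x \<in> carrier (sym_group 4)"
  then show "(e * sg x) mod 2 \<in> carrier (integer_mod_group 2)"
    by (simp add: carrier_integer_mod_group)
next
  fix x y assume x: "x \<in> carrier (sym_group 4)" and y: "y \<in> carrier (sym_group 4)"
  show "(e * sg (x \<otimes>\<^bsub>sym_group 4\<^esub> y)) mod 2 =
        ((e * sg x) mod 2) \<otimes>\<^bsub>integer_mod_group 2\<^esub> ((e * sg y) mod 2)"
    using x y sg_comp[of x y] C2_cases[OF e] C2_cases[OF sg_range[of x]] C2_cases[OF sg_range[of y]]
    by (auto simp: sym_group_mult sym_group_carrier)
qed

lemma auto_is_autm:
  assumes a: "\<alpha> \<in> auto Sym4xC2"
  shows "\<exists>g e. g permutes {1..4} \<and> e \<in> {0..<2} \<and> \<alpha> = autm g e"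
proof -
  let ?G = Sym4xC2
  have hom: "\<alpha> \<in> hom ?G ?G" and bij: "bij_betw \<alpha> (carrier ?G) (carrier ?G)"
    and exten: "\<alpha> \<in> extensional (carrier ?G)"
    using a by (auto simp: auto_def Bij_def)
  interpret gh: group_hom ?G ?G \<alpha>
    using hom group_G by (simp add: group_hom_def group_hom_axioms_def)
  have inj: "inj_on \<alpha> (carrier ?G)" and surj: "\<alpha> ` carrier ?G = carrier ?G"
    using bij by (auto simp: bij_betw_def)
  have hm: "\<alpha> (x \<otimes>\<^bsub>?G\<^esub> y) = \<alpha> x \<otimes>\<^bsub>?G\<^esub> \<alpha> y" if "x \<in> carrier ?G" "y \<in> carrier ?G" for x y
    using hom that by (simp add: hom_def)
  have inG: "\<alpha> x \<in> carrier ?G" if "x \<in> carrier ?G" for x using hom that by (auto simp: hom_def)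
  define z where "z = (id :: nat \<Rightarrow> nat, 1::int)"
  have zc: "z \<in> carrier ?G" by (simp add: z_def carrier_G permutes_id)
  have one: "\<alpha> (id, 0) = (id, 0)" using gh.hom_one by (simp add: one_G)
  have central: "\<alpha> z \<otimes>\<^bsub>?G\<^esub> y = y \<otimes>\<^bsub>?G\<^esub> \<alpha> z" if y: "y \<in> carrier ?G" for y
  proof -
    obtain x where x: "x \<in> carrier ?G" "y = \<alpha> x" using y surj by blast
    have "z \<otimes>\<^bsub>?G\<^esub> x = x \<otimes>\<^bsub>?G\<^esub> z" by (simp add: z_def mult_G add.commute)
    then show ?thesis using hm[OF zc x(1)] hm[OF x(1) zc] x by simp
  qed
  obtain \<zeta> w where zw: "\<alpha> z = (\<zeta>, w)" by fastforce
  have \<zeta>: "\<zeta> permutes {1..4}" and w: "w \<in> {0..<2}" using inG[OF zc] zw carrier_G by auto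
  have zcomm: "\<zeta> \<circ> s = s \<circ> \<zeta>" if "s permutes {1..4}" for s
  proof -
    have "(s, 0::int) \<in> carrier ?G" using that by (simp add: carrier_G)
    from central[OF this] show ?thesis using zw by (simp add: mult_G)
  qed
  have "\<zeta> = id" using center_gens[OF \<zeta> zcomm[OF s_permutes(1)] zcomm[OF s_permutes(2)] zcomm[OF s_permutes(3)]] .
  moreover have "w \<noteq> 0"
  proof
    assume "w = 0"
    then have "\<alpha> z = \<alpha> (id, 0)" using zw one \<open>\<zeta> = id\<close> by simp
    moreover have "(id, 0::int) \<in> carrier ?G" by (simp add: carrier_G permutes_id)
    ultimately have "z = (id, 0)" using inj_onD[OF inj _ zc] by blast
    then show False by (simp add: z_def)
  qed
  ultimately have az: "\<alpha> z = z" using zw w by (auto simp: z_def)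
  define \<beta> where "\<beta> p = fst (\<alpha> (p, 0::int))" for p
  define \<delta> where "\<delta> p = snd (\<alpha> (p, 0::int))" for p
  have pc: "(p, 0::int) \<in> carrier ?G" if "p permutes {1..4}" for p using that by (simp add: carrier_G)
  have a0: "\<alpha> (p, 0) = (\<beta> p, \<delta> p)" for p by (simp add: \<beta>_def \<delta>_def)
  have \<beta>p: "\<beta> p permutes {1..4}" and \<delta>p: "\<delta> p \<in> {0..<2}" if "p permutes {1..4}" for p
    using inG[OF pc[OF that]] a0[of p] carrier_G by auto
  have ab: "\<beta> (p \<circ> q) = \<beta> p \<circ> \<beta> q \<and> \<delta> (p \<circ> q) = (\<delta> p + \<delta> q) mod 2"
    if "p permutes {1..4}" "q permutes {1..4}" for p q
    using hm[OF pc[OF that(1)] pc[OF that(2)]] a0 by (simp add: mult_G)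
  have afull: "\<alpha> x = (\<beta> (fst x), (\<delta> (fst x) + snd x) mod 2)" if x: "x \<in> carrier ?G" for x
  proof -
    obtain p c where xpc: "x = (p, c)" by fastforce
    have p: "p permutes {1..4}" and c: "c \<in> {0..<2}" using x xpc carrier_G by auto
    show ?thesis
    proof (cases "c = 0")
      case True then show ?thesis using xpc a0 \<delta>p[OF p] by simp
    next
      case False
      then have c1: "c = 1" using c by auto
      have "x = (p, 0) \<otimes>\<^bsub>?G\<^esub> z" using xpc c1 by (simp add: mult_G z_def)
      then have "\<alpha> x = \<alpha> (p, 0) \<otimes>\<^bsub>?G\<^esub> \<alpha> z" using hm[OF pc[OF p] zc] by simp
      then show ?thesis using xpc c1 az a0 by (simp add: mult_G z_def)
    qed
  qed
  have \<beta>id: "\<beta> id = id" using one a0[of id] by simp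
  have \<beta>inj: "p = q" if p: "p permutes {1..4}" and q: "q permutes {1..4}" and eq: "\<beta> p = \<beta> q" for p q
  proof (cases "\<delta> p = \<delta> q")
    case True
    then have "\<alpha> (p, 0) = \<alpha> (q, 0)" using a0 eq by simp
    then show ?thesis using inj pc[OF p] pc[OF q] by (auto simp: inj_on_def)
  next
    case False
    have qc: "(q, 1::int) \<in> carrier ?G" using q by (simp add: carrier_G)
    have "\<alpha> (q, 1) = \<alpha> (p, 0)"
      using afull[OF qc] a0 eq False C2_cases[OF \<delta>p[OF p]] C2_cases[OF \<delta>p[OF q]] by auto
    then have "(q, 1::int) = (p, 0)" using inj_onD[OF inj _ qc pc[OF p]] by blast
    then show ?thesis by simp
  qed
  define x1 where "x1 = \<beta> s1"
  define x2 where "x2 = \<beta> s2"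
  define x3 where "x3 = \<beta> s3"
  note sp = s_permutes
  have bcomp: "\<beta> (p \<circ> q) = \<beta> p \<circ> \<beta> q" if "p permutes {1..4}" "q permutes {1..4}" for p q
    using ab[OF that] by simp
  have sq: "x \<circ> x = id" if "x = \<beta> s" "s permutes {1..4}" "s \<circ> s = id" for x s
    using bcomp[of s s] that \<beta>id by simp
  have nid: "x \<noteq> id" if "x = \<beta> s" "s permutes {1..4}" "s \<noteq> id" for x s
    using \<beta>inj[OF that(2) permutes_id] that \<beta>id by auto
  have i1: "x1 \<in> I9" unfolding x1_def using inv9[OF \<beta>p[OF sp(1)] sq[OF refl sp(1) s_facts(1)] nid[OF refl sp(1) s_facts(4)]] .
  have i2: "x2 \<in> I9" unfolding x2_def using inv9[OF \<beta>p[OF sp(2)] sq[OF refl sp(2) s_facts(2)] nid[OF refl sp(2) s_facts(5)]] .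
  have i3: "x3 \<in> I9" unfolding x3_def using inv9[OF \<beta>p[OF sp(3)] sq[OF refl sp(3) s_facts(3)] nid[OF refl sp(3) s_facts(6)]] .
  have d12: "x1 \<noteq> x2" unfolding x1_def x2_def using \<beta>inj[OF sp(1) sp(2)] s_facts(7) by blast
  have d23: "x2 \<noteq> x3" unfolding x2_def x3_def using \<beta>inj[OF sp(2) sp(3)] s_facts(8) by blast
  have d13: "x1 \<noteq> x3" unfolding x1_def x3_def using \<beta>inj[OF sp(1) sp(3)] s_facts(9) by blast
  have b3: "\<beta> (p \<circ> q \<circ> r) = \<beta> p \<circ> \<beta> q \<circ> \<beta> r" if "p permutes {1..4}" "q permutes {1..4}" "r permutes {1..4}" for p q r
    using bcomp[OF permutes_compose[OF that(2) that(1)] that(3)] bcomp[OF that(1) that(2)] by simp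
  have br1: "x1 \<circ> x2 \<circ> x1 = x2 \<circ> x1 \<circ> x2"
  proof -
    have "x1 \<circ> x2 \<circ> x1 = \<beta> (s1 \<circ> s2 \<circ> s1)" unfolding x1_def x2_def using b3[OF sp(1) sp(2) sp(1)] by (rule sym)
    also have "\<dots> = \<beta> (s2 \<circ> s1 \<circ> s2)" using s_facts(10) by (rule arg_cong)
    also have "\<dots> = x2 \<circ> x1 \<circ> x2" unfolding x1_def x2_def using b3[OF sp(2) sp(1) sp(2)] .
    finally show ?thesis .
  qed
  have br2: "x2 \<circ> x3 \<circ> x2 = x3 \<circ> x2 \<circ> x3"
  proof -
    have "x2 \<circ> x3 \<circ> x2 = \<beta> (s2 \<circ> s3 \<circ> s2)" unfolding x3_def x2_def using b3[OF sp(2) sp(3) sp(2)] by (rule sym)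
    also have "\<dots> = \<beta> (s3 \<circ> s2 \<circ> s3)" using s_facts(11) by (rule arg_cong)
    also have "\<dots> = x3 \<circ> x2 \<circ> x3" unfolding x3_def x2_def using b3[OF sp(3) sp(2) sp(3)] .
    finally show ?thesis .
  qed
  have cm: "x1 \<circ> x3 = x3 \<circ> x1"
  proof -
    have "x1 \<circ> x3 = \<beta> (s1 \<circ> s3)" unfolding x1_def x3_def using bcomp[OF sp(1) sp(3)] by (rule sym)
    also have "\<dots> = \<beta> (s3 \<circ> s1)" using s_facts(12) by (rule arg_cong)
    also have "\<dots> = x3 \<circ> x1" unfolding x1_def x3_def using bcomp[OF sp(3) sp(1)] .
    finally show ?thesis .
  qed
  obtain g where gS: "g \<in> S24" and gx: "x1 \<circ> g = g \<circ> s1" "x2 \<circ> g = g \<circ> s2" "x3 \<circ> g = g \<circ> s3"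
    using aut_gens[OF i1 i2 i3 d12 d23 d13 br1 br2 cm] unfolding good3_def by blast
  have g: "g permutes {1..4}" using S24_permutes[OF gS] .
  have conj: "x = g \<circ> s \<circ> inv' g" if "x \<circ> g = g \<circ> s" for x s
  proof -
    have "x = x \<circ> (g \<circ> inv' g)" using permutes_inv_o(1)[OF g] by simp
    also have "\<dots> = x \<circ> g \<circ> inv' g" by (simp add: o_assoc)
    finally have "x = x \<circ> g \<circ> inv' g" .
    then show ?thesis using that by simp
  qed
  have \<beta>hom: "\<beta> \<in> hom (sym_group 4) (sym_group 4)"
    by (rule homI) (auto simp: sym_group_carrier sym_group_mult \<beta>p bcomp)
  have \<beta>conj: "\<beta> p = g \<circ> p \<circ> inv' g" if "p permutes {1..4}" for p
    by (rule hom_S4_ext[OF sym_group_is_group \<beta>hom conj_hom[OF g]])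
       (use conj gx x1_def x2_def x3_def that in auto)
  define e where "e = \<delta> s1"
  have e: "e \<in> {0..<2}" using \<delta>p[OF sp(1)] e_def by simp
  have dcomp: "\<delta> (p \<circ> q) = (\<delta> p + \<delta> q) mod 2" if "p permutes {1..4}" "q permutes {1..4}" for p q
    using ab[OF that] by simp
  have d3: "\<delta> (p \<circ> q \<circ> r) = ((\<delta> p + \<delta> q) mod 2 + \<delta> r) mod 2" if "p permutes {1..4}" "q permutes {1..4}" "r permutes {1..4}" for p q r
    using dcomp[OF permutes_compose[OF that(2) that(1)] that(3)] dcomp[OF that(1) that(2)] by simp
  have braid_d: "\<delta> p = \<delta> q" if "p permutes {1..4}" "q permutes {1..4}" "p \<circ> q \<circ> p = q \<circ> p \<circ> q" for p q
    using d3[of p q p] d3[of q p q] that C2_cases[OF \<delta>p[OF that(1)]] C2_cases[OF \<delta>p[OF that(2)]] by auto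
  have de1: "\<delta> s1 = e" by (simp add: e_def)
  have de2: "\<delta> s2 = e" using braid_d[OF sp(1) sp(2) s_facts(10)] e_def by simp
  have de3: "\<delta> s3 = e" using braid_d[OF sp(2) sp(3) s_facts(11)] de2 by simp
  have \<delta>hom: "\<delta> \<in> hom (sym_group 4) (integer_mod_group 2)"
  proof (rule homI)
    fix x assume "x \<in> carrier (sym_group 4)"
    then show "\<delta> x \<in> carrier (integer_mod_group 2)"
      using \<delta>p[of x] by (simp add: sym_group_carrier carrier_integer_mod_group)
  qed (simp add: sym_group_carrier sym_group_mult dcomp)
  have \<delta>sg: "\<delta> p = (e * sg p) mod 2" if "p permutes {1..4}" for p
    by (rule hom_S4_ext[OF group_integer_mod_group \<delta>hom sgmod_hom[OF e]])
       (use de1 de2 de3 sg_gens e that in auto)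
  have "\<alpha> = autm g e"
  proof (rule ext)
    fix x show "\<alpha> x = autm g e x"
    proof (cases "x \<in> carrier ?G")
      case True
      obtain p c where xpc: "x = (p, c)" by fastforce
      have p: "p permutes {1..4}" and c: "c \<in> {0..<2}" using True xpc carrier_G by auto
      show ?thesis using afull[OF True] xpc True \<beta>conj[OF p] \<delta>sg[OF p]
          C2_cases[OF e] C2_cases[OF c] C2_cases[OF sg_range[of p]]
        by (auto simp: autm_def)
    next
      case False
      then show ?thesis using extensional_arb[OF exten False] by (simp add: autm_def)
    qed
  qed
  then show ?thesis using g e by blast
qed


lemma A_iso: "A \<in> iso Sym4xC2 (AutoGroup Sym4xC2)"
proof -
  have "A ` carrier Sym4xC2 = auto Sym4xC2"
  proof
    show "A ` carrier Sym4xC2 \<subseteq> auto Sym4xC2"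
      by (auto simp: A_def carrier_G intro!: autm_auto)
    show "auto Sym4xC2 \<subseteq> A ` carrier Sym4xC2"
    proof
      fix a assume "a \<in> auto Sym4xC2"
      then obtain g e where "g permutes {1..4}" "e \<in> {0..<2}" "a = autm g e" using auto_is_autm by blast
      then show "a \<in> A ` carrier Sym4xC2" by (intro image_eqI[where x="(g, e)"]) (simp_all add: A_def carrier_G)
    qed
  qed
  moreover have "inj_on A (carrier Sym4xC2)"
    by (auto simp: inj_on_def A_def carrier_G dest: autm_inj)
  ultimately show ?thesis using A_hom by (simp add: iso_iff carrier_Auto)
qed

lemma inv_G: "x \<in> carrier Sym4xC2 \<Longrightarrow> inv\<^bsub>Sym4xC2\<^esub> x = (inv' (fst x), (- snd x) mod 2)"
  unfolding Sym4xC2_def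
  by (cases x) (simp add: inv_DirProd[OF sym_group_is_group group_integer_mod_group] sym_group_carrier
       carrier_integer_mod_group sym_group_def[symmetric])

lemma inner_eq: "inner_autos Sym4xC2 = A ` ({p. p permutes {1..4}} \<times> {0})"
proof -
  have key: "(\<lambda>x\<in>carrier Sym4xC2. y \<otimes>\<^bsub>Sym4xC2\<^esub> x \<otimes>\<^bsub>Sym4xC2\<^esub> inv\<^bsub>Sym4xC2\<^esub> y) = autm (fst y) 0"
    if y: "y \<in> carrier Sym4xC2" for y
  proof (rule ext)
    fix x
    obtain g c where yg: "y = (g, c)" by fastforce
    have c: "c \<in> {0..<2}" using y yg carrier_G by auto
    show "(\<lambda>x\<in>carrier Sym4xC2. y \<otimes>\<^bsub>Sym4xC2\<^esub> x \<otimes>\<^bsub>Sym4xC2\<^esub> inv\<^bsub>Sym4xC2\<^esub> y) x = autm (fst y) 0 x"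
    proof (cases "x \<in> carrier Sym4xC2")
      case True
      obtain p d where xp: "x = (p, d)" by fastforce
      have d: "d \<in> {0..<2}" using True xp carrier_G by auto
      show ?thesis using True xp yg inv_G[OF y] C2_cases[OF c] C2_cases[OF d]
        by (auto simp: autm_def mult_G o_assoc)
    qed (simp add: autm_def)
  qed
  show ?thesis
  proof
    show "inner_autos Sym4xC2 \<subseteq> A ` ({p. p permutes {1..4}} \<times> {0})"
    proof
      fix a assume "a \<in> inner_autos Sym4xC2"
      then obtain y where y: "y \<in> carrier Sym4xC2" and a: "a = (\<lambda>x\<in>carrier Sym4xC2. y \<otimes>\<^bsub>Sym4xC2\<^esub> x \<otimes>\<^bsub>Sym4xC2\<^esub> inv\<^bsub>Sym4xC2\<^esub> y)"
        by (auto simp: inner_autos_def)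
      have "a = A (fst y, 0)" using key[OF y] a by (simp add: A_def)
      moreover have "(fst y, 0) \<in> {p. p permutes {1..4}} \<times> {0::int}" using y carrier_G by auto
      ultimately show "a \<in> A ` ({p. p permutes {1..4}} \<times> {0})" by blast
    qed
    show "A ` ({p. p permutes {1..4}} \<times> {0}) \<subseteq> inner_autos Sym4xC2"
    proof
      fix a assume "a \<in> A ` ({p. p permutes {1..4}} \<times> {0})"
      then obtain g where g: "g permutes {1..4}" and a: "a = autm g 0" by (auto simp: A_def)
      have y: "(g, 0) \<in> carrier Sym4xC2" using g by (simp add: carrier_G)
      show "a \<in> inner_autos Sym4xC2"
        unfolding inner_autos_def by (intro CollectI exI[of _ "(g, 0)"]) (use key[OF y] a y in simp)
    qed
  qed
qed


lemma coord_simps [simp]: "coord (a, b, c) 0 = a" "coord (a, b, c) 1 = b" "coord (a, b, c) 2 = c"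
  by simp_all

lemma lt3_set: "{i::nat. i < 3 \<and> P i} = (if P 0 then {0} else {}) \<union> (if P 1 then {1} else {}) \<union> (if P 2 then {2} else {})"
proof (rule Set.set_eqI)
  fix x :: nat
  have "x < 3 \<longleftrightarrow> x = 0 \<or> x = 1 \<or> x = 2" by auto
  then show "x \<in> {i::nat. i < 3 \<and> P i} \<longleftrightarrow> x \<in> (if P 0 then {0} else {}) \<union> (if P 1 then {1} else {}) \<union> (if P 2 then {2} else {})"
    by (cases "x = 0"; cases "x = 1"; cases "x = 2") auto
qed

definition adj :: "cvert \<Rightarrow> cvert \<Rightarrow> bool" where
  "adj u v \<longleftrightarrow> (case u of (a, b, c) \<Rightarrow> case v of (a', b', c') \<Rightarrow>
     (a \<noteq> a' \<and> b = b' \<and> c = c') \<or> (a = a' \<and> b \<noteq> b' \<and> c = c') \<or> (a = a' \<and> b = b' \<and> c \<noteq> c'))"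

lemma card_diff_adj: "card {i. i < 3 \<and> coord u i \<noteq> coord v i} = 1 \<longleftrightarrow> adj u v"
proof -
  obtain a b c where u: "u = (a, b, c)" by (cases u) auto
  obtain a' b' c' where v: "v = (a', b', c')" by (cases v) auto
  show ?thesis unfolding u v lt3_set adj_def
    by (cases a; cases b; cases c; cases a'; cases b'; cases c'; simp)
qed

lemma even_vertex_eq: "even_vertex (a, b, c) \<longleftrightarrow> (a \<longleftrightarrow> b \<noteq> c)"
  unfolding even_vertex_def lt3_set
  by (cases a; cases b; cases c; simp)

lemma cube_edges_eq: "cube_edges = {{u, v} | u v. adj u v}"
  unfolding cube_edges_def card_diff_adj ..

definition face :: "nat \<Rightarrow> bool \<Rightarrow> cvert set" where
  "face i b = {v. coord v i = b}"

lemma cube_faces_eq: "cube_faces = {face i b | i b. i < 3}"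
  unfolding cube_faces_def face_def ..

lemma face_explicit:
  "face 0 b = {(b, False, False), (b, False, True), (b, True, False), (b, True, True)}"
  "face 1 b = {(False, b, False), (False, b, True), (True, b, False), (True, b, True)}"
  "face 2 b = {(False, False, b), (False, True, b), (True, False, b), (True, True, b)}"
  unfolding face_def by (auto; case_tac b; auto)+

lemma i3_cases: "(i::nat) < 3 \<Longrightarrow> i = 0 \<or> i = 1 \<or> i = 2" by auto

lemma card_face: "i < 3 \<Longrightarrow> card (face i b) = 4"
  by (drule i3_cases) (auto simp: face_explicit)

lemma adj_irrefl: "\<not> adj u u"
  by (cases u) (simp add: adj_def)

lemma adj_neq: "adj u v \<Longrightarrow> u \<noteq> v"
  using adj_irrefl by blast

lemma card_edge: "adj u v \<Longrightarrow> card {u, v} = 2"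
  using adj_neq by auto

lemma X_cases:
  assumes "x \<in> cube_X"
  obtains (V) v where "x = {v}"
    | (E) u v where "x = {u, v}" "adj u v"
    | (F) i b where "x = face i b" "i < 3"
  using assms unfolding cube_X_def cube_vertices_def cube_edges_eq cube_faces_eq by blast

lemma vert_in: "{v} \<in> cube_X" unfolding cube_X_def cube_vertices_def by blast
lemma edge_in: "adj u v \<Longrightarrow> {u, v} \<in> cube_X" unfolding cube_X_def cube_edges_eq by blast
lemma face_in: "i < 3 \<Longrightarrow> face i b \<in> cube_X" unfolding cube_X_def cube_faces_eq by blast

lemma card_X: "x \<in> cube_X \<Longrightarrow> card x = 1 \<or> card x = 2 \<or> card x = 4"
  by (erule X_cases) (auto simp: card_edge card_face)

lemma vertices_iff: "x \<in> cube_vertices \<longleftrightarrow> (\<exists>v. x = {v})"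
  by (simp add: cube_vertices_def)

lemma edge_not_vertex:
  assumes "adj u v" shows "{u, v} \<notin> cube_vertices"
proof
  assume "{u, v} \<in> cube_vertices"
  then obtain w where w: "{u, v} = {w}" by (auto simp: vertices_iff)
  then have "u = w" "v = w" by blast+
  then show False using adj_neq[OF assms] by simp
qed

lemma face_not_vertex:
  assumes "i < 3" shows "face i b \<notin> cube_vertices"
proof
  assume "face i b \<in> cube_vertices"
  then obtain v where "face i b = {v}" by (auto simp: vertices_iff)
  then have "card (face i b) = 1" by simp
  with card_face[OF assms] show False by simp
qed

lemma face_not_edge:
  assumes "i < 3" shows "face i b \<notin> cube_edges"
proof
  assume "face i b \<in> cube_edges"
  then obtain u v where "face i b = {u, v}" "adj u v" unfolding cube_edges_eq by blast
  then have "card (face i b) = 2" using card_edge by simp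
  with card_face[OF assms] show False by simp
qed

lemma type_vertex: "cube_type {v} = (if even_vertex v then 1 else 2)"
proof -
  have "{v} \<in> cube_vertices" unfolding vertices_iff by blast
  moreover have "(THE w. {v} = {w}) = v" by auto
  ultimately show ?thesis by (simp add: cube_type_def)
qed

lemma type_edge:
  assumes "adj u v" shows "cube_type {u, v} = 3"
proof -
  have "{u, v} \<in> cube_edges" unfolding cube_edges_eq using assms by blast
  then show ?thesis using edge_not_vertex[OF assms] by (simp add: cube_type_def)
qed

lemma type_face: "i < 3 \<Longrightarrow> cube_type (face i b) = 4"
  using face_not_vertex face_not_edge by (auto simp: cube_type_def)

lemma type_card:
  assumes "x \<in> cube_X"
  shows "cube_type x = (if card x = 1 then (if even_vertex (the_elem x) then 1 else 2) else if card x = 2 then 3 else 4)"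
  using assms
  by (cases rule: X_cases) (auto simp: type_vertex type_edge type_face card_edge card_face)

lemma empty_not_X: "{} \<notin> cube_X"
proof
  assume "{} \<in> cube_X"
  then show False
  proof (cases rule: X_cases)
    case (F i b)
    then have "(b, b, b) \<in> face i b" using i3_cases[of i] by (auto simp: face_def)
    then show False using F by simp
  qed auto
qed


definition lab :: "nat \<Rightarrow> cvert" where
  "lab i = (if i = 1 then (False, False, False) else if i = 2 then (True, True, False)
            else if i = 3 then (True, False, True) else (False, True, True))"

definition anti :: "cvert \<Rightarrow> cvert" where
  "anti v = (case v of (a, b, c) \<Rightarrow> (\<not> a, \<not> b, \<not> c))"

lemma anti_simp [simp]: "anti (a, b, c) = (\<not> a, \<not> b, \<not> c)"
  by (simp add: anti_def)

lemma anti_anti [simp]: "anti (anti v) = v"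
  by (cases v) simp

lemma anti_inj: "anti u = anti v \<longleftrightarrow> u = v"
  by (metis anti_anti)

lemma lab_simps [simp]: "lab 1 = (False, False, False)" "lab 2 = (True, True, False)"
  "lab 3 = (True, False, True)" "lab 4 = (False, True, True)"
  by (simp_all add: lab_def)

lemma v_cases:
  "v = lab 1 \<or> v = lab 2 \<or> v = lab 3 \<or> v = lab 4 \<or>
   v = anti (lab 1) \<or> v = anti (lab 2) \<or> v = anti (lab 3) \<or> v = anti (lab 4)"
proof -
  obtain a b c where "v = (a, b, c)" by (cases v) auto
  then show ?thesis by (cases a; cases b; cases c; simp)
qed

lemma i4_cases: "i \<in> {1..4::nat} \<Longrightarrow> i = 1 \<or> i = 2 \<or> i = 3 \<or> i = 4" by auto

lemma lab_inj: "i \<in> {1..4} \<Longrightarrow> j \<in> {1..4} \<Longrightarrow> lab i = lab j \<Longrightarrow> i = j"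
  by (drule i4_cases)+ auto

lemma even_lab: "i \<in> {1..4} \<Longrightarrow> even_vertex (lab i)"
  by (drule i4_cases) (auto simp: even_vertex_eq)

lemma even_anti: "even_vertex (anti v) \<longleftrightarrow> \<not> even_vertex v"
  by (cases v) (auto simp: even_vertex_eq)

lemma even_is_lab:
  assumes "even_vertex v" shows "\<exists>i\<in>{1..4}. v = lab i"
proof -
  have e: "\<not> even_vertex (anti (lab i))" if "i \<in> {1..4}" for i using even_lab[OF that] even_anti by simp
  from v_cases[of v] show ?thesis
  proof (elim disjE)
    assume "v = lab 1" then show ?thesis by (intro bexI[of _ 1]) auto
  next
    assume "v = lab 2" then show ?thesis by (intro bexI[of _ 2]) auto
  next
    assume "v = lab 3" then show ?thesis by (intro bexI[of _ 3]) auto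
  next
    assume "v = lab 4" then show ?thesis by (intro bexI[of _ 4]) auto
  next
    assume "v = anti (lab 1)" then show ?thesis using assms e[of 1] by simp
  next
    assume "v = anti (lab 2)" then show ?thesis using assms e[of 2] by simp
  next
    assume "v = anti (lab 3)" then show ?thesis using assms e[of 3] by simp
  next
    assume "v = anti (lab 4)" then show ?thesis using assms e[of 4] by simp
  qed
qed

definition vmap :: "(nat \<Rightarrow> nat) \<Rightarrow> cvert \<Rightarrow> cvert" where
  "vmap g v = (if v = lab 1 then lab (g 1) else if v = lab 2 then lab (g 2)
     else if v = lab 3 then lab (g 3) else if v = lab 4 then lab (g 4)
     else if v = anti (lab 1) then anti (lab (g 1)) else if v = anti (lab 2) then anti (lab (g 2))
     else if v = anti (lab 3) then anti (lab (g 3)) else anti (lab (g 4)))"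

lemma vmap_lab: "i \<in> {1..4} \<Longrightarrow> vmap g (lab i) = lab (g i)"
  by (drule i4_cases) (auto simp: vmap_def)

lemma vmap_anti_lab: "i \<in> {1..4} \<Longrightarrow> vmap g (anti (lab i)) = anti (lab (g i))"
  by (drule i4_cases) (auto simp: vmap_def)

lemma vmap_cases:
  assumes "\<And>i. i \<in> {1..4} \<Longrightarrow> P (lab i)" "\<And>i. i \<in> {1..4} \<Longrightarrow> P (anti (lab i))"
  shows "P v"
  using v_cases[of v] assms(1)[of 1] assms(1)[of 2] assms(1)[of 3] assms(1)[of 4]
    assms(2)[of 1] assms(2)[of 2] assms(2)[of 3] assms(2)[of 4] by auto

lemma vmap_comp:
  assumes h: "h permutes {1..4}"
  shows "vmap (g \<circ> h) = vmap g \<circ> vmap h"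
proof (rule ext)
  fix v
  have hi: "i \<in> {1..4} \<Longrightarrow> h i \<in> {1..4}" for i by (simp only: permutes_in_image[OF h])
  show "vmap (g \<circ> h) v = (vmap g \<circ> vmap h) v"
    by (rule vmap_cases[of _ v]) (simp_all add: vmap_lab vmap_anti_lab hi del: atLeastAtMost_iff)
qed

lemma vmap_anti: "vmap g (anti v) = anti (vmap g v)"
  by (rule vmap_cases[of _ v]) (simp_all add: vmap_lab vmap_anti_lab)

lemma vmap_id: "vmap id = id"
proof (rule ext)
  fix v show "vmap id v = id v"
    by (rule vmap_cases[of _ v]) (simp_all add: vmap_lab vmap_anti_lab)
qed

lemma even_vmap:
  assumes g: "g permutes {1..4}"
  shows "even_vertex (vmap g v) \<longleftrightarrow> even_vertex v"
proof -
  have gi: "i \<in> {1..4} \<Longrightarrow> g i \<in> {1..4}" for i by (simp only: permutes_in_image[OF g])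
  show ?thesis
    by (rule vmap_cases[of _ v]) (simp_all add: vmap_lab vmap_anti_lab gi even_lab even_anti del: atLeastAtMost_iff)
qed

definition Pres :: "(cvert \<Rightarrow> cvert) \<Rightarrow> bool" where
  "Pres \<pi> \<longleftrightarrow> (\<forall>x\<in>cube_X. \<pi> ` x \<in> cube_X)"

lemma Pres_comp:
  assumes "Pres \<pi>" "Pres \<rho>" shows "Pres (\<pi> \<circ> \<rho>)"
  unfolding Pres_def
proof
  fix x assume "x \<in> cube_X"
  then have "\<pi> ` (\<rho> ` x) \<in> cube_X" using assms unfolding Pres_def by blast
  moreover have "(\<pi> \<circ> \<rho>) ` x = \<pi> ` (\<rho> ` x)" by (rule image_comp[symmetric])
  ultimately show "(\<pi> \<circ> \<rho>) ` x \<in> cube_X" by simp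
qed

lemma Pres_id: "Pres id"
  by (simp add: Pres_def)

lemma Pres_signed:
  assumes inv: "\<And>v. \<pi> (\<pi> v) = v"
    and adjp: "\<And>u v. adj u v \<Longrightarrow> adj (\<pi> u) (\<pi> v)"
    and crd: "\<And>v i. i < 3 \<Longrightarrow> coord (\<pi> v) i = (coord v (p i) \<noteq> m i)"
    and p: "\<And>i. i < 3 \<Longrightarrow> p i < 3"
  shows "Pres \<pi>"
  unfolding Pres_def
proof
  fix x assume "x \<in> cube_X"
  then show "\<pi> ` x \<in> cube_X"
  proof (cases rule: X_cases)
    case (V v) then show ?thesis by (simp add: vert_in)
  next
    case (E u v) then show ?thesis by (simp add: edge_in adjp)
  next
    case (F i b)
    have "\<pi> ` face i b = face (p i) (b \<noteq> m i)"
    proof (rule Set.set_eqI)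
      fix w
      have "w \<in> \<pi> ` face i b \<longleftrightarrow> \<pi> w \<in> face i b"
        by (metis image_iff inv)
      also have "\<dots> \<longleftrightarrow> w \<in> face (p i) (b \<noteq> m i)"
        using crd[OF F(2), of w] by (auto simp: face_def)
      finally show "w \<in> \<pi> ` face i b \<longleftrightarrow> w \<in> face (p i) (b \<noteq> m i)" .
    qed
    then show ?thesis using F p face_in by simp
  qed
qed

definition pm1 :: "nat \<Rightarrow> nat" where "pm1 i = (if i = 0 then 1 else if i = 1 then 0 else 2)"
definition pm3 :: "nat \<Rightarrow> nat" where "pm3 i = (if i = 1 then 2 else if i = 2 then 1 else 0)"

lemma vmap_conc [simp]:
  "vmap g (False, False, False) = lab (g 1)" "vmap g (True, True, False) = lab (g 2)"
  "vmap g (True, False, True) = lab (g 3)" "vmap g (False, True, True) = lab (g 4)"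
  "vmap g (True, True, True) = anti (lab (g 1))" "vmap g (False, False, True) = anti (lab (g 2))"
  "vmap g (False, True, False) = anti (lab (g 3))" "vmap g (True, False, False) = anti (lab (g 4))"
  by (simp_all add: vmap_def)

lemma vmap_s1: "vmap s1 = (\<lambda>(x, y, z). (\<not> y, \<not> x, z))"
proof (rule ext)
  fix v :: cvert obtain a b c where "v = (a, b, c)" by (cases v) auto
  then show "vmap s1 v = (\<lambda>(x, y, z). (\<not> y, \<not> x, z)) v" by (cases a; cases b; cases c; simp)
qed

lemma vmap_s2: "vmap s2 = (\<lambda>(x, y, z). (x, z, y))"
proof (rule ext)
  fix v :: cvert obtain a b c where "v = (a, b, c)" by (cases v) auto
  then show "vmap s2 v = (\<lambda>(x, y, z). (x, z, y)) v" by (cases a; cases b; cases c; simp)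
qed

lemma vmap_s3: "vmap s3 = (\<lambda>(x, y, z). (y, x, z))"
proof (rule ext)
  fix v :: cvert obtain a b c where "v = (a, b, c)" by (cases v) auto
  then show "vmap s3 v = (\<lambda>(x, y, z). (y, x, z)) v" by (cases a; cases b; cases c; simp)
qed

lemma Pres_s1: "Pres (vmap s1)"
  unfolding vmap_s1
  by (rule Pres_signed[where p = pm1 and m = "\<lambda>i. i \<noteq> 2"])
     (auto simp: adj_def pm1_def dest!: i3_cases)

lemma Pres_s2: "Pres (vmap s2)"
  unfolding vmap_s2
  by (rule Pres_signed[where p = pm3 and m = "\<lambda>i. False"])
     (auto simp: adj_def pm3_def dest!: i3_cases)

lemma Pres_s3: "Pres (vmap s3)"
  unfolding vmap_s3
  by (rule Pres_signed[where p = pm1 and m = "\<lambda>i. False"])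
     (auto simp: adj_def pm1_def dest!: i3_cases)

lemma Pres_anti: "Pres anti"
  by (rule Pres_signed[where p = id and m = "\<lambda>i. True"])
     (auto simp: adj_def dest!: i3_cases)

lemma Pres_vmap:
  assumes g: "g permutes {1..4}"
  shows "Pres (vmap g)"
proof -
  obtain w where gw: "g = word w" using S24_words S4_in_S24 g by blast
  have "Pres (vmap (word w))"
  proof (induction w)
    case Nil then show ?case by (simp only: word.simps vmap_id Pres_id)
  next
    case (Cons i w)
    have wp: "word w permutes {1..4}" using word_carrier[of w] by (simp add: sym_group_carrier)
    have "Pres (vmap (gen i))" using Pres_s1 Pres_s2 Pres_s3 by (simp add: gen_def)
    moreover have "vmap (word (i # w)) = vmap (gen i) \<circ> vmap (word w)"
      using vmap_comp[OF wp, of "gen i"] by (simp only: word.simps)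
    ultimately show ?case using Cons.IH Pres_comp by metis
  qed
  then show ?thesis using gw by simp
qed


definition vm :: "(nat \<Rightarrow> nat) \<Rightarrow> int \<Rightarrow> cvert \<Rightarrow> cvert" where
  "vm g e = (if e = 0 then vmap g else anti \<circ> vmap g)"

definition Phi :: "(nat \<Rightarrow> nat) \<times> int \<Rightarrow> cvert set \<Rightarrow> cvert set" where
  "Phi x = (\<lambda>S\<in>cube_X. vm (fst x) (snd x) ` S)"

lemma vm_Pres: "g permutes {1..4} \<Longrightarrow> Pres (vm g e)"
  using Pres_vmap Pres_anti Pres_comp by (simp add: vm_def)

lemma vm_comp:
  assumes h: "h permutes {1..4}" and e: "e \<in> {0..<2}" and f: "f \<in> {0..<2}"
  shows "vm g e (vm h f v) = vm (g \<circ> h) ((e + f) mod 2) v"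
proof -
  have c: "vmap (g \<circ> h) w = vmap g (vmap h w)" for w using vmap_comp[OF h] by simp
  show ?thesis using C2_cases[OF e] C2_cases[OF f]
    by (auto simp: vm_def c vmap_anti)
qed

lemma vm_id: "vm id 0 v = v"
  by (simp add: vm_def vmap_id)

lemma vm_inv:
  assumes g: "g permutes {1..4}" and e: "e \<in> {0..<2}"
  shows "vm (inv' g) e (vm g e v) = v" "vm g e (vm (inv' g) e v) = v"
proof -
  have ig: "inv' g permutes {1..4}" using permutes_inv[OF g] .
  have ee: "(e + e) mod 2 = 0" using C2_cases[OF e] by auto
  show "vm (inv' g) e (vm g e v) = v"
    using vm_comp[OF g e e, of "inv' g"] permutes_inv_o(2)[OF g] ee vm_id by simp
  show "vm g e (vm (inv' g) e v) = v"
    using vm_comp[OF ig e e, of g] permutes_inv_o(1)[OF g] ee vm_id by simp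
qed

lemma vm_inj:
  assumes g: "g permutes {1..4}" and e: "e \<in> {0..<2}"
  shows "inj (vm g e)"
  by (metis injI vm_inv(1)[OF g e])

lemma even_vm:
  assumes g: "g permutes {1..4}" and e: "e \<in> {0..<2}"
  shows "even_vertex (vm g e v) \<longleftrightarrow> (even_vertex v \<longleftrightarrow> e = 0)"
  using C2_cases[OF e] by (auto simp: vm_def even_vmap[OF g] even_anti)

definition tsw :: "int \<Rightarrow> nat \<Rightarrow> nat" where
  "tsw e t = (if e = 0 then t else if t = 1 then 2 else if t = 2 then 1 else t)"

lemma tsw_inj: "tsw e s = tsw e t \<longleftrightarrow> s = t"
  by (auto simp: tsw_def split: if_splits)

lemma type_image:
  assumes g: "g permutes {1..4}" and e: "e \<in> {0..<2}" and x: "x \<in> cube_X"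
  shows "cube_type (vm g e ` x) = tsw e (cube_type x)"
proof -
  let ?\<pi> = "vm g e"
  have px: "?\<pi> ` x \<in> cube_X" using vm_Pres[OF g] x by (simp add: Pres_def)
  have cx: "card (?\<pi> ` x) = card x" using vm_inj[OF g e] by (simp add: card_image inj_on_subset)
  show ?thesis
  proof (cases "card x = 1")
    case True
    then obtain v where xv: "x = {v}" using card_1_singletonE by blast
    show ?thesis using xv even_vm[OF g e] C2_cases[OF e] by (auto simp: type_vertex tsw_def)
  next
    case False
    then show ?thesis using type_card[OF x] type_card[OF px] cx by (simp add: tsw_def)
  qed
qed

lemma inc_image:
  assumes "inj \<pi>"
  shows "cube_inc (\<pi> ` x) (\<pi> ` y) \<longleftrightarrow> cube_inc x y"
  using assms by (auto simp: cube_inc_def inj_image_subset_iff inj_image_eq_iff psubset_eq)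

lemma Phi_Bij:
  assumes g: "g permutes {1..4}" and e: "e \<in> {0..<2}"
  shows "Phi (g, e) \<in> Bij cube_X"
proof -
  have ig: "inv' g permutes {1..4}" using permutes_inv[OF g] .
  have P1: "vm g e ` x \<in> cube_X" if "x \<in> cube_X" for x using vm_Pres[OF g] that by (simp add: Pres_def)
  have P2: "vm (inv' g) e ` x \<in> cube_X" if "x \<in> cube_X" for x using vm_Pres[OF ig] that by (simp add: Pres_def)
  have "bij_betw (Phi (g, e)) cube_X cube_X"
  proof (rule bij_betw_byWitness[where f' = "Phi (inv' g, e)"])
    show "\<forall>a\<in>cube_X. Phi (inv' g, e) (Phi (g, e) a) = a"
      using P1 vm_inv(1)[OF g e] by (simp add: Phi_def image_image)
    show "\<forall>a'\<in>cube_X. Phi (g, e) (Phi (inv' g, e) a') = a'"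
      using P2 vm_inv(2)[OF g e] by (simp add: Phi_def image_image)
    show "Phi (g, e) ` cube_X \<subseteq> cube_X" using P1 by (auto simp: Phi_def)
    show "Phi (inv' g, e) ` cube_X \<subseteq> cube_X" using P2 by (auto simp: Phi_def)
  qed
  then show ?thesis by (simp add: Bij_def Phi_def)
qed

lemma Phi_corr:
  assumes g: "g permutes {1..4}" and e: "e \<in> {0..<2}"
  shows "Phi (g, e) \<in> correlations cube_X cube_inc cube_type"
  using Phi_Bij[OF g e] type_image[OF g e] inc_image[OF vm_inj[OF g e]]
  by (simp add: correlations_def Phi_def tsw_inj)

lemma carrier_Cor: "carrier (CorGroup cube_X cube_inc cube_type) = correlations cube_X cube_inc cube_type"
  by (simp add: CorGroup_def)

lemma mult_Cor: "a \<in> Bij E \<Longrightarrow> b \<in> Bij E \<Longrightarrow> a \<otimes>\<^bsub>CorGroup E inc t\<^esub> b = compose E a b"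
  by (simp add: CorGroup_def BijGroup_def)

lemma Phi_hom: "Phi \<in> hom Sym4xC2 (CorGroup cube_X cube_inc cube_type)"
proof (rule homI)
  fix x assume "x \<in> carrier Sym4xC2"
  then show "Phi x \<in> carrier (CorGroup cube_X cube_inc cube_type)"
    using Phi_corr by (auto simp: carrier_G carrier_Cor)
next
  fix x y assume x: "x \<in> carrier Sym4xC2" and y: "y \<in> carrier Sym4xC2"
  obtain g e where xpc: "x = (g, e)" by fastforce
  obtain h f where yqd: "y = (h, f)" by fastforce
  have g: "g permutes {1..4}" and e: "e \<in> {0..<2}" using x xpc carrier_G by auto
  have h: "h permutes {1..4}" and f: "f \<in> {0..<2}" using y yqd carrier_G by auto
  have "compose cube_X (Phi (g, e)) (Phi (h, f)) = Phi (g \<circ> h, (e + f) mod 2)"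
  proof (rule ext)
    fix z show "compose cube_X (Phi (g, e)) (Phi (h, f)) z = Phi (g \<circ> h, (e + f) mod 2) z"
    proof (cases "z \<in> cube_X")
      case True
      have "vm h f ` z \<in> cube_X" using vm_Pres[OF h] True by (simp add: Pres_def)
      then show ?thesis using True vm_comp[OF h e f, of g] by (simp add: compose_def Phi_def image_image)
    qed (simp add: compose_def Phi_def)
  qed
  then show "Phi (x \<otimes>\<^bsub>Sym4xC2\<^esub> y) = Phi x \<otimes>\<^bsub>CorGroup cube_X cube_inc cube_type\<^esub> Phi y"
    using xpc yqd Phi_Bij[OF g e] Phi_Bij[OF h f] by (simp add: mult_G mult_Cor)
qed

lemma Phi_inj: "inj_on Phi (carrier Sym4xC2)"
proof (rule inj_onI)
  fix x y assume x: "x \<in> carrier Sym4xC2" and y: "y \<in> carrier Sym4xC2" and eq: "Phi x = Phi y"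
  obtain g e where xpc: "x = (g, e)" by fastforce
  obtain h f where yqd: "y = (h, f)" by fastforce
  have g: "g permutes {1..4}" and e: "e \<in> {0..<2}" using x xpc carrier_G by auto
  have h: "h permutes {1..4}" and f: "f \<in> {0..<2}" using y yqd carrier_G by auto
  have pt: "vm g e v = vm h f v" for v
    using fun_cong[OF eq, of "{v}"] vert_in[of v] xpc yqd by (simp add: Phi_def)
  have ef: "e = f" using pt[of "lab 1"] even_vm[OF g e, of "lab 1"] even_vm[OF h f, of "lab 1"]
      C2_cases[OF e] C2_cases[OF f] by auto
  have gi: "g i = h i" if i: "i \<in> {1..4}" for i
  proof -
    have "vmap g (lab i) = vmap h (lab i)" using pt[of "lab i"] ef by (cases "f = 0") (auto simp: vm_def anti_inj)
    then have "lab (g i) = lab (h i)" using vmap_lab[OF i] by simp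
    moreover have "g i \<in> {1..4}" "h i \<in> {1..4}" using i by (simp_all only: permutes_in_image[OF g] permutes_in_image[OF h])
    ultimately show ?thesis using lab_inj by blast
  qed
  have "g = h" using perm4_of[OF g] perm4_of[OF h] gi[of 1] gi[of 2] gi[of 3] gi[of 4] by simp
  then show "x = y" using xpc yqd ef by simp
qed


declare split_paired_Ex [simp del] split_paired_All [simp del]

lemma corr_D:
  assumes "\<alpha> \<in> correlations E inc t"
  shows "bij_betw \<alpha> E E" "\<alpha> \<in> extensional E"
    "\<And>x y. x \<in> E \<Longrightarrow> y \<in> E \<Longrightarrow> t x = t y \<longleftrightarrow> t (\<alpha> x) = t (\<alpha> y)"
    "\<And>x y. x \<in> E \<Longrightarrow> y \<in> E \<Longrightarrow> inc x y \<longleftrightarrow> inc (\<alpha> x) (\<alpha> y)"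
  using assms by (auto simp: correlations_def Bij_def)

definition Qp :: "('x set) \<Rightarrow> ('x \<Rightarrow> 'x \<Rightarrow> bool) \<Rightarrow> ('x \<Rightarrow> 'i) \<Rightarrow> 'x \<Rightarrow> bool" where
  "Qp E inc t x \<longleftrightarrow> (\<exists>y\<in>E. t y \<noteq> t x \<and>
     (\<forall>x'\<in>E. \<forall>y'\<in>E. t x' = t x \<longrightarrow> t y' = t y \<longrightarrow> \<not> inc x' y'))"

lemma Q_corr:
  assumes a: "\<alpha> \<in> correlations E inc t" and x: "x \<in> E"
  shows "Qp E inc t (\<alpha> x) \<longleftrightarrow> Qp E inc t x"
proof -
  note D = corr_D[OF a]
  have img: "\<alpha> ` E = E" and inE: "\<And>z. z \<in> E \<Longrightarrow> \<alpha> z \<in> E" using D(1) by (auto simp: bij_betw_def)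
  have surj: "\<exists>z\<in>E. w = \<alpha> z" if "w \<in> E" for w using img that by blast
  show ?thesis
  proof
    assume "Qp E inc t (\<alpha> x)"
    then obtain y' where y': "y' \<in> E" "t y' \<noteq> t (\<alpha> x)"
      and H: "\<forall>x'\<in>E. \<forall>y''\<in>E. t x' = t (\<alpha> x) \<longrightarrow> t y'' = t y' \<longrightarrow> \<not> inc x' y''"
      unfolding Qp_def by blast
    obtain y0 where y0: "y0 \<in> E" "y' = \<alpha> y0" using surj[OF y'(1)] by blast
    show "Qp E inc t x" unfolding Qp_def
    proof (intro bexI[of _ y0] conjI ballI impI)
      show "t y0 \<noteq> t x" using y' y0 D(3)[OF y0(1) x] by auto
      fix x'' y'' assume "x'' \<in> E" "y'' \<in> E" "t x'' = t x" "t y'' = t y0"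
      then show "\<not> inc x'' y''"
        using H inE D(3)[OF \<open>x'' \<in> E\<close> x] D(3)[OF \<open>y'' \<in> E\<close> y0(1)] D(4)[OF \<open>x'' \<in> E\<close> \<open>y'' \<in> E\<close>] y0
        by auto
    qed (rule y0(1))
  next
    assume "Qp E inc t x"
    then obtain y where y: "y \<in> E" "t y \<noteq> t x"
      and H: "\<forall>x'\<in>E. \<forall>y'\<in>E. t x' = t x \<longrightarrow> t y' = t y \<longrightarrow> \<not> inc x' y'"
      unfolding Qp_def by blast
    show "Qp E inc t (\<alpha> x)" unfolding Qp_def
    proof (intro bexI[of _ "\<alpha> y"] conjI ballI impI)
      show "t (\<alpha> y) \<noteq> t (\<alpha> x)" using y D(3)[OF y(1) x] by auto
      fix x' y' assume xy': "x' \<in> E" "y' \<in> E" "t x' = t (\<alpha> x)" "t y' = t (\<alpha> y)"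
      obtain x0 where x0: "x0 \<in> E" "x' = \<alpha> x0" using surj[OF xy'(1)] by blast
      obtain y0 where y0: "y0 \<in> E" "y' = \<alpha> y0" using surj[OF xy'(2)] by blast
      show "\<not> inc x' y'"
        using H x0 y0 xy' D(3)[OF x0(1) x] D(3)[OF y0(1) y(1)] D(4)[OF x0(1) y0(1)] by auto
    qed (rule inE[OF y(1)])
  qed
qed

lemma CI_corr:
  assumes a: "\<alpha> \<in> correlations E inc t" and x: "x \<in> E" and y: "y \<in> E"
  shows "(\<exists>z\<in>E. inc (\<alpha> x) z \<and> inc (\<alpha> y) z) \<longleftrightarrow> (\<exists>z\<in>E. inc x z \<and> inc y z)"
proof -
  note D = corr_D[OF a]
  have img: "\<alpha> ` E = E" using D(1) by (auto simp: bij_betw_def)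
  show ?thesis
  proof
    assume "\<exists>z\<in>E. inc (\<alpha> x) z \<and> inc (\<alpha> y) z"
    then obtain z where z: "z \<in> E" "inc (\<alpha> x) z" "inc (\<alpha> y) z" by blast
    obtain z0 where z0: "z0 \<in> E" "z = \<alpha> z0" using img z(1) by blast
    show "\<exists>z\<in>E. inc x z \<and> inc y z" using z z0 D(4)[OF x z0(1)] D(4)[OF y z0(1)] by blast
  next
    assume "\<exists>z\<in>E. inc x z \<and> inc y z"
    then obtain z where z: "z \<in> E" "inc x z" "inc y z" by blast
    have "\<alpha> z \<in> E" using img z(1) by blast
    then show "\<exists>z\<in>E. inc (\<alpha> x) z \<and> inc (\<alpha> y) z" using z D(4)[OF x z(1)] D(4)[OF y z(1)] by blast
  qed
qed

lemma inc_sing: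
  assumes z: "z \<in> cube_X"
  shows "cube_inc {w} z \<longleftrightarrow> w \<in> z \<and> z \<notin> cube_vertices"
proof
  assume "cube_inc {w} z"
  then have "{w} \<subset> z \<or> z \<subset> {w}" by (simp add: cube_inc_def)
  moreover have "\<not> z \<subset> {w}"
  proof
    assume "z \<subset> {w}" then have "z = {}" by blast
    then show False using z empty_not_X by simp
  qed
  ultimately have "{w} \<subset> z" by blast
  then show "w \<in> z \<and> z \<notin> cube_vertices" by (auto simp: vertices_iff)
next
  assume "w \<in> z \<and> z \<notin> cube_vertices"
  then have "{w} \<subset> z" by (auto simp: vertices_iff)
  then show "cube_inc {w} z" by (simp add: cube_inc_def)
qed

lemma type_vert_iff: "x \<in> cube_X \<Longrightarrow> cube_type x \<in> {1, 2} \<longleftrightarrow> x \<in> cube_vertices"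
  by (simp add: cube_type_def)

lemma type_range: "cube_type x \<in> {1, 2, 3, 4}"
  by (simp add: cube_type_def)

definition rep :: "nat \<Rightarrow> cvert set" where
  "rep k = (if k = 1 then {(False, False, False)} else if k = 2 then {(True, False, False)}
            else if k = 3 then {(False, False, False), (True, False, False)} else face 1 False)"

lemma rep_facts:
  "rep k \<in> cube_X" "k \<in> {1, 2, 3, 4} \<Longrightarrow> cube_type (rep k) = k"
proof -
  have a: "adj (False, False, False) (True, False, False)" by (simp add: adj_def)
  show "rep k \<in> cube_X" using vert_in edge_in[OF a] face_in[of 1] by (simp add: rep_def)
  show "k \<in> {1, 2, 3, 4} \<Longrightarrow> cube_type (rep k) = k"
    using type_edge[OF a] type_face[of 1 False] by (auto simp: rep_def type_vertex even_vertex_eq)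
qed

lemma rep_inc_facts:
  "cube_inc (rep 1) (rep 3)" "cube_inc (rep 2) (rep 3)" "cube_inc (rep 1) (rep 4)"
  "cube_inc (rep 2) (rep 4)" "cube_inc (rep 3) (rep 4)"
proof -
  have f: "face 1 False = {(False, False, False), (False, False, True), (True, False, False), (True, False, True)}"
    using face_explicit(2)[of False] by simp
  have r: "rep 1 = {(False, False, False)}" "rep 2 = {(True, False, False)}"
    "rep 3 = {(False, False, False), (True, False, False)}" "rep 4 = face 1 False"
    by (simp_all add: rep_def)
  show "cube_inc (rep 1) (rep 3)" unfolding r cube_inc_def by blast
  show "cube_inc (rep 2) (rep 3)" unfolding r cube_inc_def by blast
  show "cube_inc (rep 1) (rep 4)" unfolding r f cube_inc_def by blast
  show "cube_inc (rep 2) (rep 4)" unfolding r f cube_inc_def by blast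
  show "cube_inc (rep 3) (rep 4)" unfolding r f cube_inc_def by blast
qed

lemma cube_inc_sym: "cube_inc x y \<longleftrightarrow> cube_inc y x"
  by (auto simp: cube_inc_def)

lemma rep_inc: "a \<in> {1, 2, 3, 4} \<Longrightarrow> b \<in> {1, 2, 3, 4} \<Longrightarrow> a \<noteq> b \<Longrightarrow> \<not> (a \<in> {1, 2} \<and> b \<in> {1, 2}) \<Longrightarrow> cube_inc (rep a) (rep b)"
  using rep_inc_facts cube_inc_sym by (simp only: insert_iff empty_iff) (elim disjE; simp)

lemma Q_vertex:
  assumes x: "x \<in> cube_X"
  shows "Qp cube_X cube_inc cube_type x \<longleftrightarrow> x \<in> cube_vertices"
proof
  assume q: "Qp cube_X cube_inc cube_type x"
  show "x \<in> cube_vertices"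
  proof (rule ccontr)
    assume nv: "x \<notin> cube_vertices"
    obtain y where y: "y \<in> cube_X" "cube_type y \<noteq> cube_type x"
      and H: "\<forall>x'\<in>cube_X. \<forall>y'\<in>cube_X. cube_type x' = cube_type x \<longrightarrow> cube_type y' = cube_type y \<longrightarrow> \<not> cube_inc x' y'"
      using q unfolding Qp_def by blast
    have tx: "cube_type x \<notin> {1, 2}" using type_vert_iff[OF x] nv by blast
    have "cube_inc (rep (cube_type x)) (rep (cube_type y))"
      using rep_inc[OF type_range type_range y(2)[symmetric]] tx by blast
    moreover have "cube_type (rep (cube_type x)) = cube_type x" "cube_type (rep (cube_type y)) = cube_type y"
      using rep_facts(2)[OF type_range] by blast+
    ultimately show False using H rep_facts(1) by blast
  qed
next
  assume "x \<in> cube_vertices"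
  then obtain v where xv: "x = {v}" by (auto simp: vertices_iff)
  show "Qp cube_X cube_inc cube_type x" unfolding Qp_def
  proof (intro bexI[of _ "{anti v}"] conjI ballI impI)
    show "cube_type {anti v} \<noteq> cube_type x" using xv by (simp add: type_vertex even_anti)
    fix x' y' assume a: "x' \<in> cube_X" "y' \<in> cube_X" "cube_type x' = cube_type x" "cube_type y' = cube_type {anti v}"
    have "cube_type x' \<in> {1, 2}" "cube_type y' \<in> {1, 2}" using a(3,4) xv by (simp_all add: type_vertex)
    then have "x' \<in> cube_vertices" "y' \<in> cube_vertices"
      using type_vert_iff[OF a(1)] type_vert_iff[OF a(2)] by blast+
    then show "\<not> cube_inc x' y'" by (auto simp: vertices_iff cube_inc_def)
  qed (rule vert_in)
qed

lemma adj_anti: "\<not> adj u (anti u)"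
  by (cases u) (simp add: adj_def)

lemma coord_anti: "i < 3 \<Longrightarrow> coord (anti u) i = (\<not> coord u i)"
  by (cases u) (auto dest!: i3_cases)

lemma CI_vert: "(\<exists>z\<in>cube_X. cube_inc {u} z \<and> cube_inc {v} z) \<longleftrightarrow> v \<noteq> anti u"
proof
  assume "\<exists>z\<in>cube_X. cube_inc {u} z \<and> cube_inc {v} z"
  then obtain z where z: "z \<in> cube_X" "u \<in> z" "v \<in> z" "z \<notin> cube_vertices" using inc_sing by blast
  show "v \<noteq> anti u"
  proof
    assume va: "v = anti u"
    from z(1) show False
    proof (cases rule: X_cases)
      case (V w) then show False using z(4) by (auto simp: vertices_iff)
    next
      case (E p q)
      have "u \<noteq> anti u" by (cases u) auto
      then have "{p, q} = {u, anti u}" using z va E by auto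
      then have "adj u (anti u) \<or> adj (anti u) u" using E(2) by (auto simp: doubleton_eq_iff)
      then show False using adj_anti[of u] adj_anti[of "anti u"] by simp
    next
      case (F i b)
      then show False using z va coord_anti[OF F(2), of u] by (auto simp: face_def)
    qed
  qed
next
  assume va: "v \<noteq> anti u"
  obtain a b c where u: "u = (a, b, c)" by (cases u) auto
  obtain a' b' c' where v: "v = (a', b', c')" by (cases v) auto
  have "\<exists>i<3. coord u i = coord v i" using va u v
    by (auto intro: exI[of _ 0] exI[of _ 1] exI[of _ 2])
  then obtain i where i: "i < 3" "coord u i = coord v i" by blast
  let ?z = "face i (coord u i)"
  have "?z \<in> cube_X" "u \<in> ?z" "v \<in> ?z" "?z \<notin> cube_vertices"
    using face_in[OF i(1)] face_not_vertex[OF i(1)] i by (auto simp: face_def)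
  then show "\<exists>z\<in>cube_X. cube_inc {u} z \<and> cube_inc {v} z" using inc_sing by blast
qed


declare split_paired_Ex [simp del] split_paired_All [simp del]

lemma corr_is_Phi:
  assumes a: "\<alpha> \<in> correlations cube_X cube_inc cube_type"
  shows "\<exists>g e. g permutes {1..4} \<and> e \<in> {0..<2} \<and> \<alpha> = Phi (g, e)"
proof -
  note D = corr_D[OF a]
  have inj: "inj_on \<alpha> cube_X" and img: "\<alpha> ` cube_X = cube_X" using D(1) by (auto simp: bij_betw_def)
  have inX: "\<alpha> x \<in> cube_X" if "x \<in> cube_X" for x using img that by blast
  have vv: "\<alpha> x \<in> cube_vertices \<longleftrightarrow> x \<in> cube_vertices" if x: "x \<in> cube_X" for x
    using Q_corr[OF a x] Q_vertex[OF x] Q_vertex[OF inX[OF x]] by simp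
  have "\<forall>v. \<exists>w. \<alpha> {v} = {w}"
  proof
    fix v
    have "{v} \<in> cube_vertices" unfolding vertices_iff by blast
    then have "\<alpha> {v} \<in> cube_vertices" using vv[OF vert_in] by simp
    then show "\<exists>w. \<alpha> {v} = {w}" unfolding vertices_iff .
  qed
  then obtain \<pi> where pi: "\<And>v. \<alpha> {v} = {\<pi> v}" by metis
  have pinj: "inj \<pi>"
  proof (rule injI)
    fix u v assume "\<pi> u = \<pi> v"
    then have "\<alpha> {u} = \<alpha> {v}" using pi by simp
    then have "{u} = {v}" using inj_onD[OF inj _ vert_in vert_in] by blast
    then show "u = v" by simp
  qed
  have psurj: "surj \<pi>" by (rule finite_UNIV_inj_surj[OF finite_UNIV pinj])
  have panti: "\<pi> (anti u) = anti (\<pi> u)" for u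
  proof -
    have "\<not> (\<exists>z\<in>cube_X. cube_inc {u} z \<and> cube_inc {anti u} z)" using CI_vert by simp
    then have "\<not> (\<exists>z\<in>cube_X. cube_inc (\<alpha> {u}) z \<and> cube_inc (\<alpha> {anti u}) z)"
      using CI_corr[OF a vert_in vert_in] by simp
    then show ?thesis using CI_vert[of "\<pi> u" "\<pi> (anti u)"] pi by auto
  qed
  have par: "even_vertex (\<pi> v) \<longleftrightarrow> (even_vertex v \<longleftrightarrow> even_vertex (\<pi> (lab 1)))" for v
  proof -
    have "cube_type {v} = cube_type {lab 1} \<longleftrightarrow> cube_type {\<pi> v} = cube_type {\<pi> (lab 1)}"
      using D(3)[OF vert_in vert_in] pi by simp
    moreover have "even_vertex (lab 1)" by (simp add: even_vertex_eq)
    ultimately show ?thesis by (auto simp: type_vertex split: if_splits)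
  qed
  define e :: int where "e = (if even_vertex (\<pi> (lab 1)) then 0 else 1)"
  have e: "e \<in> {0..<2}" by (simp add: e_def)
  define \<rho> where "\<rho> = (if e = 0 then \<pi> else anti \<circ> \<pi>)"
  have \<rho>even: "even_vertex (\<rho> v) \<longleftrightarrow> even_vertex v" for v
    using par[of v] by (auto simp: \<rho>_def e_def even_anti)
  have \<rho>inj: "\<rho> u = \<rho> v \<Longrightarrow> u = v" for u v
    using injD[OF pinj] by (cases "e = 0") (auto simp: \<rho>_def anti_inj)
  have \<pi>\<rho>: "\<pi> v = (if e = 0 then \<rho> v else anti (\<rho> v))" for v
    by (simp add: \<rho>_def)
  define g where "g i = (if i \<in> {1..4} then (SOME j. j \<in> {1..4} \<and> \<rho> (lab i) = lab j) else i)" for i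
  have glab: "g i \<in> {1..4} \<and> \<rho> (lab i) = lab (g i)" if i: "i \<in> {1..4}" for i
  proof -
    have "\<exists>j. j \<in> {1..4} \<and> \<rho> (lab i) = lab j"
      using even_is_lab[of "\<rho> (lab i)"] \<rho>even even_lab[OF i] by blast
    from someI_ex[OF this] show ?thesis using i by (simp add: g_def)
  qed
  have ginj: "inj_on g {1..4}"
  proof (rule inj_onI)
    fix i j assume i: "i \<in> {1..4}" and j: "j \<in> {1..4}" and "g i = g j"
    then have "\<rho> (lab i) = \<rho> (lab j)" using glab[OF i] glab[OF j] by simp
    then show "i = j" using lab_inj[OF i j] \<rho>inj by blast
  qed
  have gimg: "g ` {1..4} = {1..4}"
    by (rule endo_inj_surj) (use glab ginj in auto)
  have gb: "bij_betw g {1..4} {1..4}" unfolding bij_betw_def using ginj gimg by blast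
  have g: "g permutes {1..4}"
  proof (rule bij_imp_permutes[OF gb])
    fix x :: nat assume "x \<notin> {1..4}" then show "g x = x" by (simp only: g_def if_False)
  qed
  have vmeq: "vm g e v = \<pi> v" for v
  proof (rule vmap_cases[of _ v])
    fix i :: nat assume i: "i \<in> {1..4}"
    show "vm g e (lab i) = \<pi> (lab i)"
      using glab[OF i] vmap_lab[OF i, of g] \<pi>\<rho>[of "lab i"] by (simp add: vm_def)
    show "vm g e (anti (lab i)) = \<pi> (anti (lab i))"
      using glab[OF i] vmap_anti_lab[OF i, of g] \<pi>\<rho>[of "lab i"] panti[of "lab i"] by (simp add: vm_def)
  qed
  have ax: "\<alpha> x = \<pi> ` x" if x: "x \<in> cube_X" for x
  proof (cases "x \<in> cube_vertices")
    case True
    then obtain v where "x = {v}" unfolding vertices_iff by blast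
    then show ?thesis using pi by simp
  next
    case False
    have nv: "\<alpha> x \<notin> cube_vertices" using vv[OF x] False by simp
    have mem: "\<pi> u \<in> \<alpha> x \<longleftrightarrow> u \<in> x" for u
    proof -
      have "\<pi> u \<in> \<alpha> x \<longleftrightarrow> cube_inc {\<pi> u} (\<alpha> x)" using inc_sing[OF inX[OF x]] nv by simp
      also have "\<dots> \<longleftrightarrow> cube_inc (\<alpha> {u}) (\<alpha> x)" using pi by simp
      also have "\<dots> \<longleftrightarrow> cube_inc {u} x" using D(4)[OF vert_in x] by simp
      also have "\<dots> \<longleftrightarrow> u \<in> x" using inc_sing[OF x] False by simp
      finally show ?thesis .
    qed
    show ?thesis
    proof (rule Set.set_eqI)
      fix w
      obtain u where "w = \<pi> u" using psurj by (metis surjD)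
      then show "w \<in> \<alpha> x \<longleftrightarrow> w \<in> \<pi> ` x" using mem pinj by (auto simp: inj_eq)
    qed
  qed
  have "\<alpha> = Phi (g, e)"
  proof (rule ext)
    fix S show "\<alpha> S = Phi (g, e) S"
    proof (cases "S \<in> cube_X")
      case True
      have "vm g e ` S = \<pi> ` S" using vmeq by (simp add: image_def)
      then show ?thesis using True ax[OF True] by (simp add: Phi_def)
    next
      case False
      then show ?thesis using extensional_arb[OF D(2) False] by (simp add: Phi_def)
    qed
  qed
  then show ?thesis using g e by blast
qed

lemma typepres_eq:
  "type_preserving_correlations cube_X cube_inc cube_type = Phi ` ({p. p permutes {1..4}} \<times> {0})"
proof
  show "type_preserving_correlations cube_X cube_inc cube_type \<subseteq> Phi ` ({p. p permutes {1..4}} \<times> {0})"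
  proof
    fix \<alpha> assume "\<alpha> \<in> type_preserving_correlations cube_X cube_inc cube_type"
    then have a: "\<alpha> \<in> correlations cube_X cube_inc cube_type" and tp: "\<forall>x\<in>cube_X. cube_type (\<alpha> x) = cube_type x"
      by (auto simp: type_preserving_correlations_def)
    obtain g e where g: "g permutes {1..4}" and e: "e \<in> {0..<2}" and ae: "\<alpha> = Phi (g, e)"
      using corr_is_Phi[OF a] by blast
    have "e = 0"
    proof (rule ccontr)
      assume "e \<noteq> 0"
      have "cube_type (\<alpha> {lab 1}) = tsw e (cube_type {lab 1})"
        using ae type_image[OF g e vert_in] vert_in by (simp add: Phi_def)
      moreover have "cube_type {lab 1} = 1" by (simp add: type_vertex even_vertex_eq)
      ultimately have "cube_type (\<alpha> {lab 1}) = 2" using \<open>e \<noteq> 0\<close> by (simp add: tsw_def)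
      then show False using tp vert_in \<open>cube_type {lab 1} = 1\<close> by fastforce
    qed
    then show "\<alpha> \<in> Phi ` ({p. p permutes {1..4}} \<times> {0})" using ae g by blast
  qed
  show "Phi ` ({p. p permutes {1..4}} \<times> {0}) \<subseteq> type_preserving_correlations cube_X cube_inc cube_type"
  proof
    fix \<alpha> assume "\<alpha> \<in> Phi ` ({p. p permutes {1..4}} \<times> {0})"
    then obtain g where g: "g permutes {1..4}" and ae: "\<alpha> = Phi (g, 0)" by blast
    have e: "(0::int) \<in> {0..<2}" by simp
    show "\<alpha> \<in> type_preserving_correlations cube_X cube_inc cube_type"
      using Phi_corr[OF g e] type_image[OF g e] ae
      by (auto simp: type_preserving_correlations_def Phi_def tsw_def)
  qed
qed


lemma Phi_iso: "Phi \<in> iso Sym4xC2 (CorGroup cube_X cube_inc cube_type)"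
proof -
  have "Phi ` carrier Sym4xC2 = correlations cube_X cube_inc cube_type"
  proof
    show "Phi ` carrier Sym4xC2 \<subseteq> correlations cube_X cube_inc cube_type"
      using Phi_corr by (auto simp: carrier_G)
    show "correlations cube_X cube_inc cube_type \<subseteq> Phi ` carrier Sym4xC2"
    proof
      fix \<alpha> assume "\<alpha> \<in> correlations cube_X cube_inc cube_type"
      then obtain g e where "g permutes {1..4}" "e \<in> {0..<2}" "\<alpha> = Phi (g, e)" using corr_is_Phi by blast
      then show "\<alpha> \<in> Phi ` carrier Sym4xC2" by (intro image_eqI[where x="(g, e)"]) (simp_all add: carrier_G)
    qed
  qed
  then show ?thesis using Phi_hom Phi_inj by (simp add: iso_iff carrier_Cor)
qed

lemma X_finite: "x \<in> cube_X \<Longrightarrow> finite x"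
  using card_X by (metis card.infinite zero_neq_numeral zero_neq_one)

lemma card_type: "x \<in> cube_X \<Longrightarrow> y \<in> cube_X \<Longrightarrow> cube_type x = cube_type y \<Longrightarrow> card x = card y"
  using card_X[of x] card_X[of y] type_card[of x] type_card[of y] by (auto split: if_splits)

lemma incsys: "incidence_system cube_X cube_inc cube_type cube_I"
  unfolding incidence_system_def
proof (intro conjI ballI impI)
  show "finite cube_I" by (simp add: cube_I_def)
  show "cube_type ` cube_X = cube_I"
  proof
    show "cube_type ` cube_X \<subseteq> cube_I" using type_range by (auto simp: cube_I_def)
    show "cube_I \<subseteq> cube_type ` cube_X"
    proof
      fix k assume "k \<in> cube_I"
      then have "k \<in> {1, 2, 3, 4}" by (simp add: cube_I_def)
      then show "k \<in> cube_type ` cube_X" using rep_facts[of k] by (metis image_eqI)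
    qed
  qed
  fix x y assume x: "x \<in> cube_X" and y: "y \<in> cube_X"
  show "cube_inc x y = cube_inc y x" by (rule cube_inc_sym)
  assume t: "cube_type x = cube_type y"
  have c: "card x = card y" using card_type[OF x y t] .
  show "\<not> cube_inc x y"
  proof
    assume "cube_inc x y"
    then have "x \<subset> y \<or> y \<subset> x" by (simp add: cube_inc_def)
    then show False
    proof
      assume xy: "x \<subset> y"
      have "card x < card y" by (rule psubset_card_mono[OF X_finite[OF y] xy])
      with c show False by simp
    next
      assume yx: "y \<subset> x"
      have "card y < card x" by (rule psubset_card_mono[OF X_finite[OF x] yx])
      with c show False by simp
    qed
  qed
qed

lemma mult_Inn: "a \<otimes>\<^bsub>InnGroup G\<^esub> b = a \<otimes>\<^bsub>AutoGroup G\<^esub> b"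
  by (simp add: InnGroup_def)

lemma carrier_Inn: "carrier (InnGroup G) = inner_autos G"
  by (simp add: InnGroup_def)

lemma mult_TP: "a \<otimes>\<^bsub>TypePresCorGroup E inc t\<^esub> b = a \<otimes>\<^bsub>CorGroup E inc t\<^esub> b"
  by (simp add: TypePresCorGroup_def CorGroup_def)

lemma carrier_TP: "carrier (TypePresCorGroup E inc t) = type_preserving_correlations E inc t"
  by (simp add: TypePresCorGroup_def)

theorem mainTheorem3:
  shows "incidence_geometric_representation Sym4xC2 cube_X cube_inc cube_type cube_I"
proof -
  let ?G = Sym4xC2
  let ?C = "CorGroup cube_X cube_inc cube_type"
  let ?T = "TypePresCorGroup cube_X cube_inc cube_type"
  define \<phi> where "\<phi> = Phi \<circ> inv_into (carrier ?G) A"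
  have iso2: "\<phi> \<in> iso (AutoGroup ?G) ?C"
    unfolding \<phi>_def by (rule iso_set_trans[OF group.iso_set_sym[OF group_G A_iso] Phi_iso])
  have Ainj: "inj_on A (carrier ?G)" using A_iso by (simp add: iso_iff)
  have S0: "{p. p permutes {1..4}} \<times> {0::int} \<subseteq> carrier ?G" by (auto simp: carrier_G)
  have phiA: "\<phi> (A x) = Phi x" if "x \<in> carrier ?G" for x
    using that Ainj by (simp add: \<phi>_def)
  have inner_sub: "inner_autos ?G \<subseteq> carrier (AutoGroup ?G)"
    using inner_eq A_hom S0 by (auto simp: hom_def)
  have img1: "\<phi> ` inner_autos ?G = type_preserving_correlations cube_X cube_inc cube_type"
  proof -
    have "\<phi> ` inner_autos ?G = \<phi> ` A ` ({p. p permutes {1..4}} \<times> {0})" by (simp add: inner_eq)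
    also have "\<dots> = Phi ` ({p. p permutes {1..4}} \<times> {0})"
      using phiA S0 by (auto simp: image_image intro!: image_cong)
    also have "\<dots> = type_preserving_correlations cube_X cube_inc cube_type" by (rule typepres_eq[symmetric])
    finally show ?thesis .
  qed
  have iso1: "\<phi> \<in> iso (InnGroup ?G) ?T"
  proof -
    have hom2: "\<phi> \<in> hom (AutoGroup ?G) ?C" using iso2 by (simp add: iso_iff)
    have "\<phi> \<in> hom (InnGroup ?G) ?T"
    proof (rule homI)
      fix a assume "a \<in> carrier (InnGroup ?G)"
      then show "\<phi> a \<in> carrier ?T" using img1 by (auto simp: carrier_Inn carrier_TP)
    next
      fix a b assume "a \<in> carrier (InnGroup ?G)" "b \<in> carrier (InnGroup ?G)"
      then have "a \<in> carrier (AutoGroup ?G)" "b \<in> carrier (AutoGroup ?G)" using inner_sub by (auto simp: carrier_Inn)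
      then show "\<phi> (a \<otimes>\<^bsub>InnGroup ?G\<^esub> b) = \<phi> a \<otimes>\<^bsub>?T\<^esub> \<phi> b"
        using hom2 by (simp add: mult_Inn mult_TP hom_def)
    qed
    moreover have "inj_on \<phi> (carrier (InnGroup ?G))"
      using iso2 inner_sub inj_on_subset by (fastforce simp: iso_iff carrier_Inn)
    ultimately show ?thesis using img1 by (simp add: iso_iff carrier_Inn carrier_TP)
  qed
  show ?thesis unfolding incidence_geometric_representation_def
    using incsys iso1 iso2 by blast
qed


end
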